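(* Let $\Lambda_{\mathbf q}$, the bar resolution $\mathbb B(\Lambda_{\mathbf q})$, the elements $f_\beta$ and the submodules $\mathbb P_m$ be as in the context. Then the bar differential maps $\mathbb P_m$ into $\mathbb P_{m-1}$ for every $m$, so $\mathbb P=(\mathbb P_m)_m$ is a subcomplex of $\mathbb B(\Lambda_{\mathbf q})$; moreover, for $|\beta|=m$, the bar differential sends $\tilde f_\beta$ to $$\sum_{j=1}^n\Big(\prod_{l<j}q_{l,j}^{\beta_l}\,x_j\tilde f_{\beta-[j]}+(-1)^m\prod_{l>j}q_{j,l}^{\beta_l}\,\tilde f_{\beta-[j]}x_j\Big).$$
   Context: $k$ is a field of characteristic $0$. Fix $n\ge1$ and $q_{i,j}\in k^*$ with $q_{j,i}=q_{i,j}^{-1}$, $q_{i,i}=-1$, and let $\Lambda_{\mathbf q}=k\langle x_1,\dots,x_n\mid x_ix_j=-q_{i,j}x_jx_i,\ x_i^2=0\rangle$. The bar resolution $\mathbb B(\Lambda_{\mathbf q})$ has $\mathbb B_m=\Lambda_{\mathbf q}^{\otimes(m+2)}$ (tensor over $k$) with differential $d(a_0\otimes\cdots\otimes a_{m+1})=\sum_{i=0}^m(-1)^ia_0\otimes\cdots\otimes a_ia_{i+1}\otimes\cdots\otimes a_{m+1}$. For $\beta\in\mathbb Z^n$ let $|\beta|=\sum\beta_i$ and $[l]$ the $l$-th unit vector. Define $f_\beta\in\Lambda_{\mathbf q}^{\otimes|\beta|}$ by: $f_{(0,\dots,0)}=1$, $f_{[l]}=x_l$, $f_\beta=0$ if some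 $\beta_l<0$, and for $\beta\in\mathbb N^n$, $f_\beta=\sum_{l=1}^n\prod_{k>l}q_{l,k}^{\beta_k}\,f_{\beta-[l]}\otimes x_l$. Put $\tilde f_\beta=1\otimes f_\beta\otimes 1\in\mathbb B_{|\beta|}$ and let $\mathbb P_m=\bigoplus_{\beta\in\mathbb N^n,|\beta|=m}\Lambda_{\mathbf q}\otimes f_\beta\otimes\Lambda_{\mathbf q}\subseteq\mathbb B_m$, the $\Lambda_{\mathbf q}^e$-submodule generated by the $\tilde f_\beta$ with $|\beta|=m$. *)

theory Defs
  imports Main
begin

text \<open>Concrete model of the quantum exterior algebra Lambda_q on generators x_1..x_n,
  realised on its standard k-basis x_S (S a subset of {1..n}, x_S the increasing
  product of the x_i, i in S).  An element of Lambda_q is its coefficient function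
  nat set => 'k (supported on subsets of {1..n}); an element of the m-fold tensor
  power over k is a coefficient function on lists of m such subsets.\<close>

type_synonym 'k lam = "nat set \<Rightarrow> 'k"
type_synonym 'k tens = "nat set list \<Rightarrow> 'k"

definition ebas :: "nat set \<Rightarrow> 'k::field lam" where
  "ebas S = (\<lambda>U. if U = S then 1 else 0)"

text \<open>x_S x_T = qcoef q S T x_(S union T) for disjoint S, T (from x_s x_t = - q s t x_t x_s);
  x_S x_T = 0 if S, T meet (from x_i^2 = 0).\<close>
definition qcoef :: "(nat \<Rightarrow> nat \<Rightarrow> 'k::field) \<Rightarrow> nat set \<Rightarrow> nat set \<Rightarrow> 'k" where
  "qcoef q S T = (\<Prod>s\<in>S. \<Prod>t\<in>T. if t < s then - q s t else 1)"

definition lmul :: "(nat \<Rightarrow> nat \<Rightarrow> 'k::field) \<Rightarrow> nat \<Rightarrow> 'k lam \<Rightarrow> 'k lam \<Rightarrow> 'k lam" where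
  "lmul q n a b = (\<lambda>U. \<Sum>S\<in>Pow {1..n}. \<Sum>T\<in>Pow {1..n}.
      if S \<inter> T = {} \<and> S \<union> T = U then a S * b T * qcoef q S T else 0)"

definition tensl :: "'k::field lam list \<Rightarrow> 'k tens" where
  "tensl as = (\<lambda>ws. if length ws = length as then (\<Prod>i<length as. (as!i) (ws!i)) else 0)"

definition tbas :: "nat \<Rightarrow> nat \<Rightarrow> nat set list set" where
  "tbas n r = {ws. length ws = r \<and> set ws \<subseteq> Pow {1..n}}"

text \<open>Bar differential d : B_m = Lambda^{(x)(m+2)} -> B_(m-1), extended k-linearly from
  d(a_0 (x) ... (x) a_(m+1)) = sum_(i=0..m) (-1)^i a_0 (x) ... (x) a_i a_(i+1) (x) ... (x) a_(m+1).\<close>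
definition bar_d :: "(nat \<Rightarrow> nat \<Rightarrow> 'k::field) \<Rightarrow> nat \<Rightarrow> nat \<Rightarrow> 'k tens \<Rightarrow> 'k tens" where
  "bar_d q n m u = (\<lambda>vs. \<Sum>ws\<in>tbas n (m+2). u ws *
      (\<Sum>i\<le>m. (-1)^i * tensl (take i (map ebas ws)
          @ [lmul q n (ebas (ws!i)) (ebas (ws!(i+1)))] @ drop (i+2) (map ebas ws)) vs))"

text \<open>f_beta, by recursion on |beta| (first argument m = |beta|); beta is indexed by 1..n.\<close>
fun fb :: "(nat \<Rightarrow> nat \<Rightarrow> 'k::field) \<Rightarrow> nat \<Rightarrow> nat \<Rightarrow> (nat \<Rightarrow> nat) \<Rightarrow> 'k tens" where
  "fb q n 0 \<beta> = (\<lambda>ws. if ws = [] then 1 else 0)"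
| "fb q n (Suc m) \<beta> = (\<lambda>ws. \<Sum>l=1..n. if \<beta> l = 0 then 0 else
      (\<Prod>k\<in>{l<..n}. q l k ^ \<beta> k) *
      (if ws \<noteq> [] \<and> last ws = {l} then fb q n m (\<beta>(l := \<beta> l - 1)) (butlast ws) else 0))"

definition bsize :: "nat \<Rightarrow> (nat \<Rightarrow> nat) \<Rightarrow> nat" where
  "bsize n \<beta> = (\<Sum>i=1..n. \<beta> i)"

definition fbeta :: "(nat \<Rightarrow> nat \<Rightarrow> 'k::field) \<Rightarrow> nat \<Rightarrow> (nat \<Rightarrow> nat) \<Rightarrow> 'k tens" where
  "fbeta q n \<beta> = fb q n (bsize n \<beta>) \<beta>"

text \<open>tilde f_beta = 1 (x) f_beta (x) 1.\<close>
definition ft :: "(nat \<Rightarrow> nat \<Rightarrow> 'k::field) \<Rightarrow> nat \<Rightarrow> (nat \<Rightarrow> nat) \<Rightarrow> 'k tens" where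
  "ft q n \<beta> = (\<lambda>ws. if 2 \<le> length ws \<and> hd ws = {} \<and> last ws = {}
                     then fbeta q n \<beta> (butlast (tl ws)) else 0)"

definition fdec :: "(nat \<Rightarrow> nat \<Rightarrow> 'k::field) \<Rightarrow> nat \<Rightarrow> (nat \<Rightarrow> nat) \<Rightarrow> nat \<Rightarrow> 'k tens" where
  "fdec q n \<beta> j = (if \<beta> j = 0 then (\<lambda>_. 0) else ft q n (\<beta>(j := \<beta> j - 1)))"

definition lact :: "(nat \<Rightarrow> nat \<Rightarrow> 'k::field) \<Rightarrow> nat \<Rightarrow> 'k lam \<Rightarrow> 'k tens \<Rightarrow> 'k tens" where
  "lact q n a u = (\<lambda>ws. case ws of [] \<Rightarrow> 0
      | W # rest \<Rightarrow> (\<Sum>T\<in>Pow {1..n}. lmul q n a (ebas T) W * u (T # rest)))"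

definition ract :: "(nat \<Rightarrow> nat \<Rightarrow> 'k::field) \<Rightarrow> nat \<Rightarrow> 'k tens \<Rightarrow> 'k lam \<Rightarrow> 'k tens" where
  "ract q n u b = (\<lambda>ws. if ws = [] then 0 else
      (\<Sum>T\<in>Pow {1..n}. lmul q n (ebas T) b (last ws) * u (butlast ws @ [T])))"

text \<open>Action of an element lam = sum lam(S,T) x_S (x) x_T of Lambda_q^e.\<close>
definition envact :: "(nat \<Rightarrow> nat \<Rightarrow> 'k::field) \<Rightarrow> nat \<Rightarrow> (nat set \<Rightarrow> nat set \<Rightarrow> 'k) \<Rightarrow> 'k tens \<Rightarrow> 'k tens" where
  "envact q n lam u = (\<lambda>ws. \<Sum>S\<in>Pow {1..n}. \<Sum>T\<in>Pow {1..n}.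
      lam S T * lact q n (ebas S) (ract q n u (ebas T)) ws)"

definition multidx :: "nat \<Rightarrow> nat \<Rightarrow> (nat \<Rightarrow> nat) set" where
  "multidx n m = {\<beta>. (\<forall>i. i \<notin> {1..n} \<longrightarrow> \<beta> i = 0) \<and> bsize n \<beta> = m}"

definition Pm :: "(nat \<Rightarrow> nat \<Rightarrow> 'k::field) \<Rightarrow> nat \<Rightarrow> nat \<Rightarrow> 'k tens set" where
  "Pm q n m = {u. \<exists>c. u = (\<lambda>ws. \<Sum>\<beta>\<in>multidx n m. envact q n (c \<beta>) (ft q n \<beta>) ws)}"

end

theory Submission
  imports Defs
begin


definition cnt :: "nat set list \<Rightarrow> nat \<Rightarrow> nat" where
  "cnt ws k = length (filter (\<lambda>x. x = {k}) ws)"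

lemma cnt_simps[simp]:
  "cnt [] k = 0" "cnt (x # ws) k = (if x = {k} then 1 else 0) + cnt ws k"
  "cnt (ws @ vs) k = cnt ws k + cnt vs k"
  by (auto simp: cnt_def)

definition sgl :: "nat \<Rightarrow> nat set \<Rightarrow> bool" where
  "sgl n x = (\<exists>l\<in>{1..n}. x = {l})"

fun hr :: "(nat \<Rightarrow> nat \<Rightarrow> 'k::field) \<Rightarrow> nat \<Rightarrow> nat set list \<Rightarrow> 'k" where
  "hr q n [] = 1"
| "hr q n (x # rs) = (if sgl n x then
     (\<Prod>k\<in>{the_elem x<..n}. q (the_elem x) k ^ cnt rs k) * hr q n rs else 0)"

definition hh :: "(nat \<Rightarrow> nat \<Rightarrow> 'k::field) \<Rightarrow> nat \<Rightarrow> nat set list \<Rightarrow> 'k" where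
  "hh q n ws = hr q n (rev ws)"

lemma cnt_rev[simp]: "cnt (rev ws) k = cnt ws k"
  by (simp add: cnt_def rev_filter[symmetric])

lemma hh_Nil[simp]: "hh q n [] = 1" by (simp add: hh_def)

lemma hh_snoc: "j \<in> {1..n} \<Longrightarrow> hh q n (ws @ [{j}]) = (\<Prod>k\<in>{j<..n}. q j k ^ cnt ws k) * hh q n ws"
  by (simp add: hh_def sgl_def)

lemma hh_snoc0: "\<not> sgl n x \<Longrightarrow> hh q n (ws @ [x]) = 0"
  by (simp add: hh_def)

lemma hh_nz: "hh q n ws \<noteq> 0 \<Longrightarrow> \<forall>x\<in>set ws. sgl n x"
proof (induction ws rule: rev_induct)
  case Nil then show ?case by simp
next
  case (snoc x xs)
  then show ?case by (auto simp: hh_def split: if_splits)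
qed

lemma prod_pow_bump:
  fixes f :: "nat \<Rightarrow> 'k::comm_monoid_mult"
  assumes "finite A"
  shows "(\<Prod>k\<in>A. f k ^ (c k + (if k = j then 1 else 0))) = (if j \<in> A then f j else 1) * (\<Prod>k\<in>A. f k ^ c k)"
proof -
  have "(\<Prod>k\<in>A. f k ^ (c k + (if k = j then 1 else 0))) = (\<Prod>k\<in>A. f k ^ c k) * (\<Prod>k\<in>A. f k ^ (if k = j then 1 else 0))"
    by (simp add: power_add prod.distrib)
  also have "(\<Prod>k\<in>A. f k ^ (if k = j then 1 else 0)) = (\<Prod>k\<in>A. if k = j then f k else 1)"
    by (rule prod.cong) auto
  also have "\<dots> = (if j \<in> A then f j else 1)"
    using assms by (simp add: prod.delta)
  finally show ?thesis by (simp add: mult.commute)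
qed

lemma cnt_single: "cnt [{l}] k = (if k = l then 1 else 0)"
  by auto

lemma hh_cons:
  assumes "j \<in> {1..n}"
  shows "hh q n ({j} # ws) = (\<Prod>k\<in>{1..<j}. q k j ^ cnt ws k) * hh q n ws"
proof (induction ws rule: rev_induct)
  case Nil
  then show ?case using assms by (simp add: hh_def sgl_def)
next
  case (snoc x xs)
  show ?case
  proof (cases "sgl n x")
    case False
    then show ?thesis using hh_snoc0[of n x q xs] hh_snoc0[of n x q "{j} # xs"] by simp
  next
    case True
    then obtain l where l: "l \<in> {1..n}" "x = {l}" by (auto simp: sgl_def)
    have e1: "hh q n ({j} # xs @ [x]) = (\<Prod>k\<in>{l<..n}. q l k ^ (cnt xs k + (if k = j then 1 else 0))) * hh q n ({j} # xs)"
    proof -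
      have "hh q n ({j} # xs @ [x]) = (\<Prod>k\<in>{l<..n}. q l k ^ cnt ({j} # xs) k) * hh q n ({j} # xs)"
        using hh_snoc[OF l(1), of q "{j} # xs"] l(2) by simp
      also have "(\<Prod>k\<in>{l<..n}. q l k ^ cnt ({j} # xs) k) = (\<Prod>k\<in>{l<..n}. q l k ^ (cnt xs k + (if k = j then 1 else 0)))"
        by (rule prod.cong) auto
      finally show ?thesis .
    qed
    have e2: "(\<Prod>k\<in>{1..<j}. q k j ^ cnt (xs @ [x]) k) = (\<Prod>k\<in>{1..<j}. q k j ^ (cnt xs k + (if k = l then 1 else 0)))"
      using l by (auto intro!: prod.cong)
    have c: "(if j \<in> {l<..n} then q l j else 1) = (if l \<in> {1..<j} then q l j else 1)"
      using l assms by auto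
    have "hh q n ({j} # xs @ [x]) = (if j \<in> {l<..n} then q l j else 1) * (\<Prod>k\<in>{l<..n}. q l k ^ cnt xs k)
          * ((\<Prod>k\<in>{1..<j}. q k j ^ cnt xs k) * hh q n xs)"
      unfolding e1 prod_pow_bump[OF finite_greaterThanAtMost] snoc ..
    also have "\<dots> = (if l \<in> {1..<j} then q l j else 1) * (\<Prod>k\<in>{1..<j}. q k j ^ cnt xs k)
          * ((\<Prod>k\<in>{l<..n}. q l k ^ cnt xs k) * hh q n xs)"
      unfolding c by (simp only: ac_simps)
    also have "\<dots> = (\<Prod>k\<in>{1..<j}. q k j ^ cnt (xs @ [x]) k) * hh q n (xs @ [x])"
      unfolding l(2) e2[unfolded l(2)] prod_pow_bump[OF finite_atLeastLessThan] hh_snoc[OF l(1)] ..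
    finally show ?thesis .
  qed
qed

lemma hh_swap:
  assumes "a \<in> {1..n}" "b \<in> {1..n}" "a < b"
  shows "hh q n (xs @ [{b},{a}] @ ys) = q a b * hh q n (xs @ [{a},{b}] @ ys)"
proof (induction ys rule: rev_induct)
  case Nil
  have p1: "(\<Prod>k\<in>{a<..n}. q a k ^ cnt (xs @ [{b}]) k) = (\<Prod>k\<in>{a<..n}. q a k ^ (cnt xs k + (if k = b then 1 else 0)))"
    by (rule prod.cong) auto
  have p2: "(\<Prod>k\<in>{b<..n}. q b k ^ cnt (xs @ [{a}]) k) = (\<Prod>k\<in>{b<..n}. q b k ^ (cnt xs k + (if k = a then 1 else 0)))"
    by (rule prod.cong) auto
  have "hh q n (xs @ [{b},{a}]) = (\<Prod>k\<in>{a<..n}. q a k ^ cnt (xs @ [{b}]) k) * ((\<Prod>k\<in>{b<..n}. q b k ^ cnt xs k) * hh q n xs)"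
    using hh_snoc[OF assms(1), of q "xs @ [{b}]"] hh_snoc[OF assms(2), of q xs] by simp
  also have "\<dots> = q a b * ((\<Prod>k\<in>{a<..n}. q a k ^ cnt xs k) * ((\<Prod>k\<in>{b<..n}. q b k ^ cnt xs k) * hh q n xs))"
    unfolding p1 prod_pow_bump[OF finite_greaterThanAtMost] using assms by simp
  also have "\<dots> = q a b * ((\<Prod>k\<in>{b<..n}. q b k ^ cnt (xs @ [{a}]) k) * ((\<Prod>k\<in>{a<..n}. q a k ^ cnt xs k) * hh q n xs))"
    unfolding p2 prod_pow_bump[OF finite_greaterThanAtMost] using assms by (simp only: mult_ac) simp
  also have "\<dots> = q a b * hh q n (xs @ [{a},{b}])"
    using hh_snoc[OF assms(2), of q "xs @ [{a}]"] hh_snoc[OF assms(1), of q xs] by simp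
  finally show ?case by simp
next
  case (snoc y ys)
  show ?case
  proof (cases "sgl n y")
    case False
    then show ?thesis using hh_snoc0[of n y] by (metis append_assoc mult_zero_right)
  next
    case True
    then obtain l where l: "l \<in> {1..n}" "y = {l}" by (auto simp: sgl_def)
    have c: "cnt (xs @ [{b},{a}] @ ys) = cnt (xs @ [{a},{b}] @ ys)" by (rule ext) simp
    have "hh q n (xs @ [{b},{a}] @ ys @ [y]) = (\<Prod>k\<in>{l<..n}. q l k ^ cnt (xs @ [{b},{a}] @ ys) k) * hh q n (xs @ [{b},{a}] @ ys)"
      using hh_snoc[OF l(1), of q "xs @ [{b},{a}] @ ys"] l by simp
    also have "\<dots> = q a b * ((\<Prod>k\<in>{l<..n}. q l k ^ cnt (xs @ [{a},{b}] @ ys) k) * hh q n (xs @ [{a},{b}] @ ys))"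
      unfolding c snoc by (simp only: mult_ac)
    also have "\<dots> = q a b * hh q n (xs @ [{a},{b}] @ ys @ [y])"
      using hh_snoc[OF l(1), of q "xs @ [{a},{b}] @ ys"] l by simp
    finally show ?thesis .
  qed
qed



lemma fb_hh:
  "(\<forall>k\<in>{1..n}. \<beta> k = cnt ws k) \<Longrightarrow> fb q n (length ws) \<beta> ws = hh q n ws"
proof (induction ws arbitrary: \<beta> rule: rev_induct)
  case Nil then show ?case by simp
next
  case (snoc x xs)
  show ?case
  proof (cases "sgl n x")
    case False
    have "fb q n (length (xs @ [x])) \<beta> (xs @ [x]) = 0"
      using False by (auto simp: sgl_def intro!: sum.neutral)
    then show ?thesis using hh_snoc0[OF False] by simp
  next
    case True
    then obtain l where l: "l \<in> {1..n}" "x = {l}" by (auto simp: sgl_def)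
    have bl: "\<beta> l = cnt xs l + 1" using snoc.prems l by auto
    have ih: "fb q n (length xs) (\<beta>(l := \<beta> l - 1)) xs = hh q n xs"
      using snoc.prems l by (intro snoc.IH) auto
    have pr: "(\<Prod>k\<in>{l<..n}. q l k ^ \<beta> k) = (\<Prod>k\<in>{l<..n}. q l k ^ cnt xs k)"
      using snoc.prems l by (intro prod.cong) auto
    have "fb q n (length (xs @ [x])) \<beta> (xs @ [x]) =
      (\<Sum>l'=1..n. if l' = l then (\<Prod>k\<in>{l<..n}. q l k ^ \<beta> k) * fb q n (length xs) (\<beta>(l := \<beta> l - 1)) xs else 0)"
      unfolding length_append_singleton fb.simps
      by (rule sum.cong) (use l bl in auto)
    also have "\<dots> = (\<Prod>k\<in>{l<..n}. q l k ^ \<beta> k) * fb q n (length xs) (\<beta>(l := \<beta> l - 1)) xs"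
      using l by simp
    also have "\<dots> = (\<Prod>k\<in>{l<..n}. q l k ^ cnt xs k) * hh q n xs"
      by (simp only: ih pr)
    also have "\<dots> = hh q n (xs @ [x])"
      by (simp only: hh_snoc[OF l(1)] l(2))
    finally show ?thesis .
  qed
qed

lemma fb_nz:
  "fb q n m \<beta> ws \<noteq> 0 \<Longrightarrow> length ws = m \<and> (\<forall>k\<in>{1..n}. cnt ws k \<le> \<beta> k) \<and> (\<forall>x\<in>set ws. sgl n x)"
proof (induction m arbitrary: \<beta> ws)
  case 0 then show ?case by (auto split: if_splits)
next
  case (Suc m)
  from Suc.prems obtain l where l: "l \<in> {1..n}" "\<beta> l \<noteq> 0" "ws \<noteq> []" "last ws = {l}"
    "fb q n m (\<beta>(l := \<beta> l - 1)) (butlast ws) \<noteq> 0"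
  proof -
    from Suc.prems have "(\<Sum>l=1..n. if \<beta> l = 0 then 0 else
      (\<Prod>k\<in>{l<..n}. q l k ^ \<beta> k) *
      (if ws \<noteq> [] \<and> last ws = {l} then fb q n m (\<beta>(l := \<beta> l - 1)) (butlast ws) else 0)) \<noteq> 0"
      by (simp only: fb.simps not_False_eq_True)
    then obtain l where l1: "l \<in> {1..n}" and l2: "(if \<beta> l = 0 then 0 else
      (\<Prod>k\<in>{l<..n}. q l k ^ \<beta> k) *
      (if ws \<noteq> [] \<and> last ws = {l} then fb q n m (\<beta>(l := \<beta> l - 1)) (butlast ws) else 0)) \<noteq> 0"
      by (rule sum.not_neutral_contains_not_neutral)
    have b: "\<beta> l \<noteq> 0" using l2 by (cases "\<beta> l = 0") simp_all
    have c: "ws \<noteq> [] \<and> last ws = {l}" using l2 b by (cases "ws \<noteq> [] \<and> last ws = {l}") simp_all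
    have d: "fb q n m (\<beta>(l := \<beta> l - 1)) (butlast ws) \<noteq> 0" using l2 b c by simp
    show ?thesis using that l1 b c d by blast
  qed
  have ws: "ws = butlast ws @ [{l}]" using l by (metis append_butlast_last_id)
  from Suc.IH[OF l(5)] have ih: "length (butlast ws) = m" "\<forall>k\<in>{1..n}. cnt (butlast ws) k \<le> (\<beta>(l := \<beta> l - 1)) k"
     "\<forall>x\<in>set (butlast ws). sgl n x" by auto
  have "\<forall>k\<in>{1..n}. cnt ws k \<le> \<beta> k"
  proof
    fix k assume k: "k \<in> {1..n}"
    have "cnt ws k = cnt (butlast ws) k + (if k = l then 1 else 0)"
      by (subst ws) auto
    then show "cnt ws k \<le> \<beta> k" using ih(2) k l(2) by (auto split: if_splits)
  qed
  moreover have "\<forall>x\<in>set ws. sgl n x" using ih(3) l(1) by (subst ws) (auto simp: sgl_def)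
  moreover have "length ws = Suc m" using ih(1) by (subst ws) simp
  ultimately show ?case by blast
qed

lemma cnt_sum: "(\<forall>x\<in>set ws. sgl n x) \<Longrightarrow> (\<Sum>k=1..n. cnt ws k) = length ws"
proof (induction ws)
  case Nil then show ?case by simp
next
  case (Cons x ws)
  then obtain l where l: "l \<in> {1..n}" "x = {l}" by (auto simp: sgl_def)
  have "(\<Sum>k=1..n. cnt (x # ws) k) = (\<Sum>k=1..n. (if k = l then 1 else 0)) + (\<Sum>k=1..n. cnt ws k)"
  proof -
    have "(\<Sum>k=1..n. cnt (x # ws) k) = (\<Sum>k=1..n. (if k = l then 1 else 0) + cnt ws k)"
      using l by (intro sum.cong) auto
    then show ?thesis by (simp only: sum.distrib)
  qed
  then show ?case using Cons l by simp
qed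

lemma fbeta_char:
  "fbeta q n \<beta> ws = (if length ws = bsize n \<beta> \<and> (\<forall>k\<in>{1..n}. \<beta> k = cnt ws k) then hh q n ws else 0)"
proof (cases "length ws = bsize n \<beta> \<and> (\<forall>k\<in>{1..n}. \<beta> k = cnt ws k)")
  case True
  then show ?thesis using fb_hh[of n \<beta> ws q] by (simp add: fbeta_def)
next
  case False
  have "fbeta q n \<beta> ws = 0"
  proof (rule ccontr)
    assume "fbeta q n \<beta> ws \<noteq> 0"
    from fb_nz[OF this[unfolded fbeta_def]] have h: "length ws = bsize n \<beta>"
      "\<forall>k\<in>{1..n}. cnt ws k \<le> \<beta> k" "\<forall>x\<in>set ws. sgl n x" by auto
    have "(\<Sum>k=1..n. cnt ws k) = (\<Sum>k=1..n. \<beta> k)"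
      using cnt_sum[OF h(3)] h(1) by (simp add: bsize_def)
    then have "\<forall>k\<in>{1..n}. cnt ws k = \<beta> k"
      using h(2) by (metis finite_atLeastAtMost sum_mono_inv)
    then show False using False h(1) by auto
  qed
  moreover have "(if length ws = bsize n \<beta> \<and> (\<forall>k\<in>{1..n}. \<beta> k = cnt ws k) then hh q n ws else 0) = 0"
    using False by (rule if_not_P)
  ultimately show ?thesis by simp
qed



lemma bsize_upd:
  assumes "j \<in> {1..n}"
  shows "bsize n (\<beta>(j := x)) + \<beta> j = bsize n \<beta> + x"
proof -
  have "bsize n (\<beta>(j := x)) = x + (\<Sum>i\<in>{1..n} - {j}. \<beta> i)"
    unfolding bsize_def using assms by (simp add: sum.remove)
  moreover have "bsize n \<beta> = \<beta> j + (\<Sum>i\<in>{1..n} - {j}. \<beta> i)"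
    unfolding bsize_def using assms by (simp add: sum.remove)
  ultimately show ?thesis by simp
qed

lemma bsize_ge: "j \<in> {1..n} \<Longrightarrow> \<beta> j \<le> bsize n \<beta>"
  unfolding bsize_def by (rule member_le_sum) auto

lemma fbeta_supp: "fbeta q n \<beta> X \<noteq> 0 \<Longrightarrow> length X = bsize n \<beta> \<and> (\<forall>x\<in>set X. sgl n x)"
  using hh_nz[of q n X] by (auto simp: fbeta_char split: if_splits)

lemma fbeta_non: "\<not> sgl n A \<Longrightarrow> fbeta q n \<beta> (xs @ [A] @ ys) = 0"
  using fbeta_supp[of q n \<beta> "xs @ [A] @ ys"] by auto

lemma fbeta_swap:
  assumes "a \<in> {1..n}" "b \<in> {1..n}" "a < b"
  shows "fbeta q n \<beta> (xs @ [{b},{a}] @ ys) = q a b * fbeta q n \<beta> (xs @ [{a},{b}] @ ys)"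
proof -
  have c: "cnt (xs @ [{b},{a}] @ ys) = cnt (xs @ [{a},{b}] @ ys)" by (rule ext) simp
  have l: "length (xs @ [{b},{a}] @ ys) = length (xs @ [{a},{b}] @ ys)" by simp
  show ?thesis unfolding fbeta_char c l hh_swap[OF assms] by simp
qed

lemma fbeta_cons:
  assumes j: "j \<in> {1..n}"
  shows "fbeta q n \<beta> ({j} # X) = (if \<beta> j = 0 then 0 else
          (\<Prod>k\<in>{1..<j}. q k j ^ \<beta> k) * fbeta q n (\<beta>(j := \<beta> j - 1)) X)"
proof (cases "\<beta> j = 0")
  case True
  have "\<not> (\<forall>k\<in>{1..n}. \<beta> k = cnt ({j} # X) k)" using True j by auto
  then show ?thesis using True by (simp only: fbeta_char if_False if_True simp_thms)
next
  case False
  let ?b = "\<beta>(j := \<beta> j - 1)"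
  have bs: "bsize n ?b + 1 = bsize n \<beta>" using bsize_upd[OF j, of \<beta> "\<beta> j - 1"] False by simp
  have eqc: "(length ({j} # X) = bsize n \<beta> \<and> (\<forall>k\<in>{1..n}. \<beta> k = cnt ({j} # X) k))
     = (length X = bsize n ?b \<and> (\<forall>k\<in>{1..n}. ?b k = cnt X k))"
    using bs False by auto
  show ?thesis
  proof (cases "length X = bsize n ?b \<and> (\<forall>k\<in>{1..n}. ?b k = cnt X k)")
    case True
    have pr: "(\<Prod>k\<in>{1..<j}. q k j ^ \<beta> k) = (\<Prod>k\<in>{1..<j}. q k j ^ cnt X k)"
    proof (rule prod.cong[OF refl])
      fix k assume k: "k \<in> {1..<j}"
      then have k1: "k \<in> {1..n}" and k2: "k \<noteq> j" using j by auto
      have "(\<beta>(j := \<beta> j - 1)) k = cnt X k" using True k1 by blast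
      then show "q k j ^ \<beta> k = q k j ^ cnt X k" using k2 by simp
    qed
    show ?thesis unfolding fbeta_char[of q n \<beta>] fbeta_char[of q n ?b] eqc
      by (simp only: if_P[OF True] if_not_P[OF False] pr hh_cons[OF j])
  next
    case F2: False
    show ?thesis unfolding fbeta_char[of q n \<beta>] fbeta_char[of q n ?b] eqc
      by (simp only: if_not_P[OF F2] if_not_P[OF False] mult_zero_right)
  qed
qed

lemma fbeta_snoc:
  assumes j: "j \<in> {1..n}"
  shows "fbeta q n \<beta> (X @ [{j}]) = (if \<beta> j = 0 then 0 else
          (\<Prod>k\<in>{j<..n}. q j k ^ \<beta> k) * fbeta q n (\<beta>(j := \<beta> j - 1)) X)"
proof (cases "\<beta> j = 0")
  case True
  have "\<not> (\<forall>k\<in>{1..n}. \<beta> k = cnt (X @ [{j}]) k)" using True j by auto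
  then show ?thesis using True by (simp only: fbeta_char if_False if_True simp_thms)
next
  case False
  let ?b = "\<beta>(j := \<beta> j - 1)"
  have bs: "bsize n ?b + 1 = bsize n \<beta>" using bsize_upd[OF j, of \<beta> "\<beta> j - 1"] False by simp
  have eqc: "(length (X @ [{j}]) = bsize n \<beta> \<and> (\<forall>k\<in>{1..n}. \<beta> k = cnt (X @ [{j}]) k))
     = (length X = bsize n ?b \<and> (\<forall>k\<in>{1..n}. ?b k = cnt X k))"
    using bs False by auto
  show ?thesis
  proof (cases "length X = bsize n ?b \<and> (\<forall>k\<in>{1..n}. ?b k = cnt X k)")
    case True
    have pr: "(\<Prod>k\<in>{j<..n}. q j k ^ \<beta> k) = (\<Prod>k\<in>{j<..n}. q j k ^ cnt X k)"
    proof (rule prod.cong[OF refl])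
      fix k assume k: "k \<in> {j<..n}"
      then have k1: "k \<in> {1..n}" and k2: "k \<noteq> j" using j by auto
      have "(\<beta>(j := \<beta> j - 1)) k = cnt X k" using True k1 by blast
      then show "q j k ^ \<beta> k = q j k ^ cnt X k" using k2 by simp
    qed
    show ?thesis unfolding fbeta_char[of q n \<beta>] fbeta_char[of q n ?b] eqc
      by (simp only: if_P[OF True] if_not_P[OF False] pr hh_snoc[OF j])
  next
    case F2: False
    show ?thesis unfolding fbeta_char[of q n \<beta>] fbeta_char[of q n ?b] eqc
      by (simp only: if_not_P[OF F2] if_not_P[OF False] mult_zero_right)
  qed
qed



lemma lmul_ebas:
  "lmul q n (ebas A) (ebas B) U = (if A \<subseteq> {1..n} \<and> B \<subseteq> {1..n} \<and> A \<inter> B = {} \<and> A \<union> B = U then qcoef q A B else 0)"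
proof -
  have 1: "\<And>S T. (if S \<inter> T = {} \<and> S \<union> T = U then ebas A S * ebas B T * qcoef q S T else 0) =
     (if S = A then (if T = B then (if A \<inter> B = {} \<and> A \<union> B = U then qcoef q A B else 0) else 0) else 0)"
    by (simp add: ebas_def)
  have "lmul q n (ebas A) (ebas B) U = (\<Sum>S\<in>Pow {1..n}. \<Sum>T\<in>Pow {1..n}. 
     (if S = A then (if T = B then (if A \<inter> B = {} \<and> A \<union> B = U then qcoef q A B else 0) else 0) else 0))"
    unfolding lmul_def 1 ..
  also have "\<dots> = (\<Sum>S\<in>Pow {1..n}. if S = A then (\<Sum>T\<in>Pow {1..n}. if T = B then
      (if A \<inter> B = {} \<and> A \<union> B = U then qcoef q A B else 0) else 0) else 0)"
    by (intro sum.cong refl) simp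
  finally show ?thesis by (simp add: sum.delta)
qed

lemma qcoef_empty[simp]: "qcoef q {} T = 1" "qcoef q S {} = 1"
  by (simp_all add: qcoef_def)

lemma qcoef_single: "qcoef q {a} {b} = (if b < a then - q a b else 1)"
  by (simp add: qcoef_def)

lemma tensl_Nil: "tensl [] vs = (if vs = [] then 1 else 0)"
  by (simp add: tensl_def)

lemma tensl_Cons: "tensl (a # as) vs = (case vs of [] \<Rightarrow> 0 | v # vs' \<Rightarrow> a v * tensl as vs')"
proof (cases vs)
  case Nil then show ?thesis by (simp add: tensl_def)
next
  case (Cons v vs')
  then show ?thesis by (simp add: tensl_def prod.lessThan_Suc_shift del: prod.lessThan_Suc)
qed

lemma tensl_ebas_app:
  "tensl (map ebas ws @ rest) vs = (if take (length ws) vs = ws then tensl rest (drop (length ws) vs) else 0)"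
proof (induction ws arbitrary: vs)
  case Nil then show ?case by simp
next
  case (Cons w ws)
  show ?case
  proof (cases vs)
    case Nil then show ?thesis by (simp add: tensl_Cons)
  next
    case (Cons v vs')
    then show ?thesis using Cons.IH[of vs'] by (auto simp: tensl_Cons ebas_def)
  qed
qed

lemma tensl_ebas: "tensl (map ebas ws) vs = (if vs = ws then 1 else 0)"
  using tensl_ebas_app[of ws "[]" vs] by (auto simp: tensl_Nil)

lemma tensl_mid:
  assumes "i \<le> m" "length ws = m + 2"
  shows "tensl (take i (map ebas ws) @ [a] @ drop (i+2) (map ebas ws)) vs =
    (if length vs = m + 1 \<and> take i vs = take i ws \<and> drop (i+1) vs = drop (i+2) ws then a (vs ! i) else 0)"
proof -
  have e: "take i (map ebas ws) @ [a] @ drop (i+2) (map ebas ws) = map ebas (take i ws) @ (a # map ebas (drop (i+2) ws))"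
    by (simp add: take_map drop_map)
  have lt: "length (take i ws) = i" using assms by simp
  show ?thesis
  proof (cases "i < length vs")
    case True
    have d: "drop i vs = vs ! i # drop (i+1) vs" using True by (simp add: Cons_nth_drop_Suc)
    show ?thesis unfolding e tensl_ebas_app lt d
      using True assms by (auto simp: tensl_Cons tensl_ebas dest: arg_cong[where f = length])
  next
    case False
    then show ?thesis unfolding e tensl_ebas_app lt using assms by (auto simp: tensl_Cons)
  qed
qed



lemma finite_tbas: "finite (tbas n r)"
proof -
  have "tbas n r = {ws. set ws \<subseteq> Pow {1..n} \<and> length ws = r}" unfolding tbas_def by auto
  then show ?thesis using finite_lists_length_eq[of "Pow {1..n}" r] by simp
qed

definition tt :: "(nat \<Rightarrow> nat \<Rightarrow> 'k::field) \<Rightarrow> nat \<Rightarrow> nat \<Rightarrow> nat set list \<Rightarrow> 'k tens" where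
  "tt q n i ws = tensl (take i (map ebas ws) @ [lmul q n (ebas (ws!i)) (ebas (ws!(i+1)))] @ drop (i+2) (map ebas ws))"

lemma bar_d_swap:
  "bar_d q n m u vs = (\<Sum>i\<le>m. (-1)^i * (\<Sum>ws\<in>tbas n (m+2). u ws * tt q n i ws vs))"
proof -
  have "bar_d q n m u vs = (\<Sum>ws\<in>tbas n (m+2). \<Sum>i\<le>m. (-1)^i * (u ws * tt q n i ws vs))"
    unfolding bar_d_def tt_def sum_distrib_left by (intro sum.cong refl) (simp only: ac_simps)
  also have "\<dots> = (\<Sum>i\<le>m. \<Sum>ws\<in>tbas n (m+2). (-1)^i * (u ws * tt q n i ws vs))"
    by (rule sum.swap)
  finally show ?thesis by (simp only: sum_distrib_left)
qed

lemma tt_val: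
  assumes "i \<le> m" "ws \<in> tbas n (m+2)"
  shows "tt q n i ws vs = (if length vs = m + 1 \<and> take i vs = take i ws \<and> drop (i+1) vs = drop (i+2) ws
     then lmul q n (ebas (ws!i)) (ebas (ws!(i+1))) (vs ! i) else 0)"
  using assms unfolding tt_def by (intro tensl_mid) (auto simp: tbas_def)

lemma bar_d_zero:
  assumes "\<not> (length vs = m + 1 \<and> set vs \<subseteq> Pow {1..n})"
  shows "bar_d q n m u vs = 0"
proof -
  have "tt q n i ws vs = 0" if i: "i \<le> m" and ws: "ws \<in> tbas n (m+2)" for i ws
  proof (rule ccontr)
    assume nz: "tt q n i ws vs \<noteq> 0"
    then have h: "length vs = m + 1" "take i vs = take i ws" "drop (i+1) vs = drop (i+2) ws"
      "lmul q n (ebas (ws!i)) (ebas (ws!(i+1))) (vs ! i) \<noteq> 0"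
      unfolding tt_val[OF i ws] by (auto split: if_splits)
    have wsP: "set ws \<subseteq> Pow {1..n}" using ws by (simp add: tbas_def)
    have vi: "vs ! i \<in> Pow {1..n}" using h(4) by (auto simp: lmul_ebas split: if_splits)
    have "set (take i vs) \<subseteq> Pow {1..n}" using h(2) wsP set_take_subset[of i ws] by auto
    moreover have "set (drop (i+1) vs) \<subseteq> Pow {1..n}" using h(3) wsP set_drop_subset[of "i+2" ws] by auto
    moreover have "vs = take i vs @ [vs ! i] @ drop (i+1) vs" using h(1) i by (simp add: id_take_nth_drop)
    ultimately have "set vs \<subseteq> Pow {1..n}" using vi by (metis Un_least empty_subsetI insert_subset set_append set_simps)
    then show False using assms h(1) by simp
  qed
  then show ?thesis unfolding bar_d_swap by simp
qed

lemma bar_d_term: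
  assumes "length vs = m + 1" "set vs \<subseteq> Pow {1..n}" "i \<le> m"
  shows "(\<Sum>ws\<in>tbas n (m+2). u ws * tt q n i ws vs) =
    (\<Sum>A\<in>Pow {1..n}. \<Sum>B\<in>Pow {1..n}. lmul q n (ebas A) (ebas B) (vs ! i) * u (take i vs @ [A, B] @ drop (i+1) vs))"
proof -
  define g where "g = (\<lambda>p. take i vs @ [fst p, snd p] @ drop (i+1) vs)"
  have lt: "length (take i vs) = i" using assms by simp
  have gi: "g p ! i = fst p" "g p ! (i+1) = snd p" for p
    unfolding g_def using lt by (simp_all add: nth_append)
  have gt: "take i (g p) = take i vs" "drop (i+2) (g p) = drop (i+1) vs" for p
    unfolding g_def using lt by simp_all
  have glen: "length (g p) = m + 2" for p unfolding g_def using assms by simp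
  have sub: "g ` (Pow {1..n} \<times> Pow {1..n}) \<subseteq> tbas n (m+2)"
  proof
    fix ws assume "ws \<in> g ` (Pow {1..n} \<times> Pow {1..n})"
    then obtain p where p: "p \<in> Pow {1..n} \<times> Pow {1..n}" "ws = g p" by auto
    have "set ws \<subseteq> Pow {1..n}" unfolding p(2) g_def using p(1) assms(2) set_take_subset[of i vs] set_drop_subset[of "i+1" vs]
      by (auto simp: mem_Times_iff)
    then show "ws \<in> tbas n (m+2)" using glen p(2) by (simp add: tbas_def)
  qed
  have inj: "inj_on g (Pow {1..n} \<times> Pow {1..n})"
  proof (rule inj_onI)
    fix p p' assume "g p = g p'"
    then have "fst p = fst p'" "snd p = snd p'" using gi by metis+
    then show "p = p'" by (simp add: prod_eq_iff)
  qed
  have zero: "u ws * tt q n i ws vs = 0" if ws: "ws \<in> tbas n (m+2) - g ` (Pow {1..n} \<times> Pow {1..n})" for ws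
  proof (rule ccontr)
    assume "u ws * tt q n i ws vs \<noteq> 0"
    then have nz: "tt q n i ws vs \<noteq> 0" by auto
    have wst: "ws \<in> tbas n (m+2)" using ws by simp
    then have h: "take i vs = take i ws" "drop (i+1) vs = drop (i+2) ws"
      using nz unfolding tt_val[OF assms(3) wst] by (auto split: if_splits)
    have wl: "length ws = m + 2" and wP: "set ws \<subseteq> Pow {1..n}" using wst by (auto simp: tbas_def)
    have "ws = take i ws @ [ws ! i, ws ! (i+1)] @ drop (i+2) ws"
      using wl assms(3) by (metis Cons_nth_drop_Suc add_2_eq_Suc' add_Suc_right append_Cons append_self_conv2 add.commute
        add_less_cancel_left id_take_nth_drop less_add_Suc1 less_trans_Suc nat_less_le plus_1_eq_Suc trans_less_add2 le_imp_less_Suc)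
    then have "ws = g (ws ! i, ws ! (i+1))" unfolding g_def using h by simp
    moreover have "ws ! i \<in> Pow {1..n}" "ws ! (i+1) \<in> Pow {1..n}" 
    proof -
      have "ws ! i \<in> set ws" "ws ! (i+1) \<in> set ws" using wl assms(3) by (simp_all add: nth_mem)
      then show "ws ! i \<in> Pow {1..n}" "ws ! (i+1) \<in> Pow {1..n}" using wP by blast+
    qed
    ultimately show False using ws by auto
  qed
  have "(\<Sum>ws\<in>tbas n (m+2). u ws * tt q n i ws vs) = (\<Sum>ws\<in>g ` (Pow {1..n} \<times> Pow {1..n}). u ws * tt q n i ws vs)"
    using finite_tbas sub zero by (intro sum.mono_neutral_right) auto
  also have "\<dots> = (\<Sum>p\<in>Pow {1..n} \<times> Pow {1..n}. u (g p) * tt q n i (g p) vs)"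
    using inj by (simp add: sum.reindex)
  also have "\<dots> = (\<Sum>p\<in>Pow {1..n} \<times> Pow {1..n}. lmul q n (ebas (fst p)) (ebas (snd p)) (vs ! i) * u (g p))"
  proof (rule sum.cong[OF refl])
    fix p assume "p \<in> Pow {1..n} \<times> Pow {1..n}"
    then have gp: "g p \<in> tbas n (m+2)" using sub by auto
    then show "u (g p) * tt q n i (g p) vs = lmul q n (ebas (fst p)) (ebas (snd p)) (vs ! i) * u (g p)"
      using tt_val[OF assms(3) gp, of q vs] gi gt assms(1) by simp
  qed
  also have "\<dots> = (\<Sum>A\<in>Pow {1..n}. \<Sum>B\<in>Pow {1..n}. lmul q n (ebas A) (ebas B) (vs ! i) * u (take i vs @ [A, B] @ drop (i+1) vs))"
    unfolding g_def sum.cartesian_product by (intro sum.cong refl) (auto split: prod.splits)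
  finally show ?thesis .
qed

lemma bar_d_full:
  assumes "length vs = m + 1" "set vs \<subseteq> Pow {1..n}"
  shows "bar_d q n m u vs = (\<Sum>i\<le>m. (-1)^i *
    (\<Sum>A\<in>Pow {1..n}. \<Sum>B\<in>Pow {1..n}. lmul q n (ebas A) (ebas B) (vs ! i) * u (take i vs @ [A, B] @ drop (i+1) vs)))"
  unfolding bar_d_swap using bar_d_term[OF assms] by (intro sum.cong refl) simp



lemma sum_sgl:
  assumes "\<And>B. B \<in> Pow {1..n} \<Longrightarrow> \<not> sgl n B \<Longrightarrow> G B = 0"
  shows "(\<Sum>B\<in>Pow {1..n}. G B) = (\<Sum>j=1..n. G {j})"
proof -
  have inj: "inj_on (\<lambda>j. {j}) {1..n}" by (auto intro: inj_onI)
  have "(\<Sum>j=1..n. G {j}) = (\<Sum>B\<in>(\<lambda>j. {j}) ` {1..n}. G B)"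
    using inj by (simp add: sum.reindex)
  also have "\<dots> = (\<Sum>B\<in>Pow {1..n}. G B)"
  proof (rule sum.mono_neutral_left)
    show "(\<lambda>j. {j}) ` {1..n} \<subseteq> Pow {1..n}" by auto
    show "\<forall>i\<in>Pow {1..n} - (\<lambda>j. {j}) ` {1..n}. G i = 0"
      using assms by (auto simp: sgl_def)
  qed simp
  finally show ?thesis by simp
qed

lemma cancel_pair:
  fixes q :: "nat \<Rightarrow> nat \<Rightarrow> 'k::field"
  assumes qnz: "\<forall>i\<in>{1..n}. \<forall>j\<in>{1..n}. q i j \<noteq> 0"
    and qinv: "\<forall>i\<in>{1..n}. \<forall>j\<in>{1..n}. q j i = inverse (q i j)"
    and ab: "a \<in> {1..n}" "b \<in> {1..n}" "a < b"
  shows "lmul q n (ebas {a}) (ebas {b}) U * fbeta q n \<beta> (xs @ [{a},{b}] @ ys)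
       + lmul q n (ebas {b}) (ebas {a}) U * fbeta q n \<beta> (xs @ [{b},{a}] @ ys) = 0"
proof -
  have c1: "({a} \<subseteq> {1..n} \<and> {b} \<subseteq> {1..n} \<and> {a} \<inter> {b} = {} \<and> {a} \<union> {b} = U) = ({a,b} = U)"
    using ab by auto
  have c2: "({b} \<subseteq> {1..n} \<and> {a} \<subseteq> {1..n} \<and> {b} \<inter> {a} = {} \<and> {b} \<union> {a} = U) = ({a,b} = U)"
    using ab by auto
  have l1: "lmul q n (ebas {a}) (ebas {b}) U = (if {a,b} = U then 1 else 0)"
    unfolding lmul_ebas c1 qcoef_single using ab by simp
  have l2: "lmul q n (ebas {b}) (ebas {a}) U = (if {a,b} = U then - q b a else 0)"
    unfolding lmul_ebas c2 qcoef_single using ab by simp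
  have qq: "q b a * q a b = 1"
  proof -
    have "q b a = inverse (q a b)" using qinv ab by blast
    moreover have "q a b \<noteq> 0" using qnz ab by blast
    ultimately show ?thesis by simp
  qed
  show ?thesis unfolding l1 l2 fbeta_swap[OF ab]
    by (cases "{a,b} = U") (simp_all add: mult.assoc[symmetric] qq)
qed

lemma cancel:
  fixes q :: "nat \<Rightarrow> nat \<Rightarrow> 'k::field_char_0"
  assumes qnz: "\<forall>i\<in>{1..n}. \<forall>j\<in>{1..n}. q i j \<noteq> 0"
    and qinv: "\<forall>i\<in>{1..n}. \<forall>j\<in>{1..n}. q j i = inverse (q i j)"
  shows "(\<Sum>A\<in>Pow {1..n}. \<Sum>B\<in>Pow {1..n}. lmul q n (ebas A) (ebas B) U * fbeta q n \<beta> (xs @ [A,B] @ ys)) = 0"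
proof -
  define F where "F a b = lmul q n (ebas {a}) (ebas {b}) U * fbeta q n \<beta> (xs @ [{a},{b}] @ ys)" for a b
  have "(\<Sum>A\<in>Pow {1..n}. \<Sum>B\<in>Pow {1..n}. lmul q n (ebas A) (ebas B) U * fbeta q n \<beta> (xs @ [A,B] @ ys))
      = (\<Sum>A\<in>Pow {1..n}. \<Sum>b=1..n. lmul q n (ebas A) (ebas {b}) U * fbeta q n \<beta> (xs @ [A,{b}] @ ys))"
  proof (rule sum.cong[OF refl])
    fix A
    show "(\<Sum>B\<in>Pow {1..n}. lmul q n (ebas A) (ebas B) U * fbeta q n \<beta> (xs @ [A,B] @ ys)) =
        (\<Sum>b=1..n. lmul q n (ebas A) (ebas {b}) U * fbeta q n \<beta> (xs @ [A,{b}] @ ys))"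
      by (rule sum_sgl) (use fbeta_non[of n _ q \<beta> "xs @ [A]" ys] in simp)
  qed
  also have "\<dots> = (\<Sum>a=1..n. \<Sum>b=1..n. F a b)"
    unfolding F_def
    by (rule sum_sgl) (use fbeta_non[of n _ q \<beta> xs] in simp)
  finally have S: "(\<Sum>A\<in>Pow {1..n}. \<Sum>B\<in>Pow {1..n}. lmul q n (ebas A) (ebas B) U * fbeta q n \<beta> (xs @ [A,B] @ ys))
     = (\<Sum>a=1..n. \<Sum>b=1..n. F a b)" .
  have pair: "F a b + F b a = 0" if "a \<in> {1..n}" "b \<in> {1..n}" for a b
  proof -
    consider "a < b" | "a = b" | "b < a" by linarith
    then show ?thesis
    proof cases
      case 1 then show ?thesis unfolding F_def using cancel_pair[OF qnz qinv that 1] by simp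
    next
      case 2 then show ?thesis unfolding F_def by (simp add: lmul_ebas)
    next
      case 3 then show ?thesis unfolding F_def using cancel_pair[OF qnz qinv that(2,1) 3] by (simp add: add.commute)
    qed
  qed
  have "(\<Sum>a=1..n. \<Sum>b=1..n. F a b) + (\<Sum>a=1..n. \<Sum>b=1..n. F a b)
      = (\<Sum>a=1..n. \<Sum>b=1..n. F a b) + (\<Sum>a=1..n. \<Sum>b=1..n. F b a)"
    using sum.swap[of "\<lambda>a b. F b a" "{1..n}" "{1..n}"] by simp
  also have "\<dots> = (\<Sum>a=1..n. \<Sum>b=1..n. F a b + F b a)"
    by (simp add: sum.distrib)
  also have "\<dots> = 0" by (auto intro!: sum.neutral pair)
  finally have "(\<Sum>a=1..n. \<Sum>b=1..n. F a b) = 0" by simp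
  then show ?thesis using S by simp
qed



lemma swap3b: "(\<Sum>a\<in>A. \<Sum>b\<in>B. \<Sum>c\<in>C. g a b c) = (\<Sum>c\<in>C. \<Sum>a\<in>A. \<Sum>b\<in>B. g a b c)"
proof -
  have "(\<Sum>a\<in>A. \<Sum>b\<in>B. \<Sum>c\<in>C. g a b c) = (\<Sum>a\<in>A. \<Sum>c\<in>C. \<Sum>b\<in>B. g a b c)"
    by (rule sum.cong[OF refl]) (rule sum.swap)
  also have "\<dots> = (\<Sum>c\<in>C. \<Sum>a\<in>A. \<Sum>b\<in>B. g a b c)" by (rule sum.swap)
  finally show ?thesis .
qed

lemma swap3a: "(\<Sum>a\<in>A. \<Sum>b\<in>B. \<Sum>c\<in>C. g a b c) = (\<Sum>c\<in>C. \<Sum>b\<in>B. \<Sum>a\<in>A. g a b c)"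
proof -
  have "(\<Sum>a\<in>A. \<Sum>b\<in>B. \<Sum>c\<in>C. g a b c) = (\<Sum>c\<in>C. \<Sum>a\<in>A. \<Sum>b\<in>B. g a b c)" by (rule swap3b)
  also have "\<dots> = (\<Sum>c\<in>C. \<Sum>b\<in>B. \<Sum>a\<in>A. g a b c)"
    by (rule sum.cong[OF refl]) (rule sum.swap)
  finally show ?thesis .
qed

lemma sum_ends:
  fixes m :: nat
  assumes "m \<ge> 1" "\<And>i. 0 < i \<Longrightarrow> i < m \<Longrightarrow> f i = 0"
  shows "(\<Sum>i\<le>m. f i) = f 0 + (f m :: 'a::comm_monoid_add)"
proof -
  have "(\<Sum>i\<le>m. f i) = (\<Sum>i\<in>{0, m}. f i)"
  proof (rule sum.mono_neutral_right)
    show "\<forall>i\<in>{..m} - {0, m}. f i = 0"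
    proof
      fix i assume "i \<in> {..m} - {0, m}"
      then have "0 < i" "i < m" by auto
      then show "f i = 0" by (rule assms(2))
    qed
  qed auto
  then show ?thesis using assms(1) by simp
qed

definition uform :: "(nat \<Rightarrow> nat \<Rightarrow> 'k::field) \<Rightarrow> nat \<Rightarrow> ((nat \<Rightarrow> nat) \<Rightarrow> nat set \<Rightarrow> nat set \<Rightarrow> 'k) \<Rightarrow> nat \<Rightarrow> 'k tens" where
  "uform q n c m = (\<lambda>ws. if 2 \<le> length ws \<and> hd ws \<in> Pow {1..n} \<and> last ws \<in> Pow {1..n}
     then (\<Sum>\<beta>\<in>multidx n m. c \<beta> (hd ws) (last ws) * fbeta q n \<beta> (butlast (tl ws))) else 0)"

lemma uform_app: "W \<in> Pow {1..n} \<Longrightarrow> V \<in> Pow {1..n} \<Longrightarrow>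
   uform q n c m (W # X @ [V]) = (\<Sum>\<beta>\<in>multidx n m. c \<beta> W V * fbeta q n \<beta> X)"
  by (simp add: uform_def)

definition Lc where
  "Lc q n c \<beta> j W V = (\<Sum>A\<in>Pow {1..n}. lmul q n (ebas A) (ebas {j}) W * c \<beta> A V * (\<Prod>k\<in>{1..<j}. q k j ^ \<beta> k))"
definition Rc where
  "Rc q n c \<beta> j W V = (\<Sum>B\<in>Pow {1..n}. lmul q n (ebas {j}) (ebas B) V * c \<beta> W B * (\<Prod>k\<in>{j<..n}. q j k ^ \<beta> k))"

definition SL where
  "SL q n c m W V X = (\<Sum>\<beta>\<in>multidx n m. \<Sum>j=1..n. if \<beta> j = 0 then 0 else Lc q n c \<beta> j W V * fbeta q n (\<beta>(j := \<beta> j - 1)) X)"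
definition SR where
  "SR q n c m W V X = (\<Sum>\<beta>\<in>multidx n m. \<Sum>j=1..n. if \<beta> j = 0 then 0 else Rc q n c \<beta> j W V * fbeta q n (\<beta>(j := \<beta> j - 1)) X)"

lemma decomp_list:
  assumes "2 \<le> length vs"
  obtains W X V where "vs = W # X @ [V]"
proof -
  obtain W r where r: "vs = W # r" using assms by (cases vs) auto
  then have "r \<noteq> []" using assms by auto
  then have "r = butlast r @ [last r]" by simp
  then show ?thesis using that r by metis
qed

lemma T0:
  assumes W: "W \<in> Pow {1..n}" and V: "V \<in> Pow {1..n}"
  shows "(\<Sum>A\<in>Pow {1..n}. \<Sum>B\<in>Pow {1..n}. lmul q n (ebas A) (ebas B) W * uform q n c m (A # (B # X) @ [V]))
     = SL q n c m W V X"
proof -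
  define G where "G A j \<beta> = (if \<beta> j = 0 then 0 else lmul q n (ebas A) (ebas {j}) W * c \<beta> A V *
      (\<Prod>k\<in>{1..<j}. q k j ^ \<beta> k) * fbeta q n (\<beta>(j := \<beta> j - 1)) X)" for A j \<beta>
  have "(\<Sum>A\<in>Pow {1..n}. \<Sum>B\<in>Pow {1..n}. lmul q n (ebas A) (ebas B) W * uform q n c m (A # (B # X) @ [V]))
     = (\<Sum>A\<in>Pow {1..n}. \<Sum>B\<in>Pow {1..n}. lmul q n (ebas A) (ebas B) W * (\<Sum>\<beta>\<in>multidx n m. c \<beta> A V * fbeta q n \<beta> (B # X)))"
  proof (intro sum.cong refl)
    fix A B assume A: "A \<in> Pow {1..n}"
    show "lmul q n (ebas A) (ebas B) W * uform q n c m (A # (B # X) @ [V]) =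
      lmul q n (ebas A) (ebas B) W * (\<Sum>\<beta>\<in>multidx n m. c \<beta> A V * fbeta q n \<beta> (B # X))"
      using uform_app[OF A V, of q c m "B # X"] by simp
  qed
  also have "\<dots> = (\<Sum>A\<in>Pow {1..n}. \<Sum>j=1..n. lmul q n (ebas A) (ebas {j}) W * (\<Sum>\<beta>\<in>multidx n m. c \<beta> A V * fbeta q n \<beta> ({j} # X)))"
  proof (rule sum.cong[OF refl])
    fix A
    show "(\<Sum>B\<in>Pow {1..n}. lmul q n (ebas A) (ebas B) W * (\<Sum>\<beta>\<in>multidx n m. c \<beta> A V * fbeta q n \<beta> (B # X))) =
      (\<Sum>j=1..n. lmul q n (ebas A) (ebas {j}) W * (\<Sum>\<beta>\<in>multidx n m. c \<beta> A V * fbeta q n \<beta> ({j} # X)))"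
      by (rule sum_sgl) (use fbeta_non[of n _ q _ "[]" X] in simp)
  qed
  also have "\<dots> = (\<Sum>A\<in>Pow {1..n}. \<Sum>j=1..n. \<Sum>\<beta>\<in>multidx n m. G A j \<beta>)"
  proof (intro sum.cong refl)
    fix A j assume j: "j \<in> {1..n}"
    show "lmul q n (ebas A) (ebas {j}) W * (\<Sum>\<beta>\<in>multidx n m. c \<beta> A V * fbeta q n \<beta> ({j} # X)) =
        (\<Sum>\<beta>\<in>multidx n m. G A j \<beta>)"
      unfolding sum_distrib_left by (intro sum.cong refl) (simp add: G_def fbeta_cons[OF j] ac_simps)
  qed
  also have "\<dots> = (\<Sum>\<beta>\<in>multidx n m. \<Sum>j=1..n. \<Sum>A\<in>Pow {1..n}. G A j \<beta>)"
    by (rule swap3a)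
  also have "\<dots> = SL q n c m W V X"
    unfolding SL_def Lc_def
  proof (intro sum.cong refl)
    fix \<beta> j
    show "(\<Sum>A\<in>Pow {1..n}. G A j \<beta>) = (if \<beta> j = 0 then 0 else (\<Sum>A\<in>Pow {1..n}. lmul q n (ebas A) (ebas {j}) W * c \<beta> A V *
       (\<Prod>k\<in>{1..<j}. q k j ^ \<beta> k)) * fbeta q n (\<beta>(j := \<beta> j - 1)) X)"
      unfolding G_def sum_distrib_right by simp
  qed
  finally show ?thesis .
qed

lemma Tm:
  assumes W: "W \<in> Pow {1..n}" and V: "V \<in> Pow {1..n}"
  shows "(\<Sum>A\<in>Pow {1..n}. \<Sum>B\<in>Pow {1..n}. lmul q n (ebas A) (ebas B) V * uform q n c m (W # (X @ [A]) @ [B]))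
     = SR q n c m W V X"
proof -
  define G where "G j B \<beta> = (if \<beta> j = 0 then 0 else lmul q n (ebas {j}) (ebas B) V * c \<beta> W B *
      (\<Prod>k\<in>{j<..n}. q j k ^ \<beta> k) * fbeta q n (\<beta>(j := \<beta> j - 1)) X)" for B j \<beta>
  have "(\<Sum>A\<in>Pow {1..n}. \<Sum>B\<in>Pow {1..n}. lmul q n (ebas A) (ebas B) V * uform q n c m (W # (X @ [A]) @ [B]))
     = (\<Sum>A\<in>Pow {1..n}. \<Sum>B\<in>Pow {1..n}. lmul q n (ebas A) (ebas B) V * (\<Sum>\<beta>\<in>multidx n m. c \<beta> W B * fbeta q n \<beta> (X @ [A])))"
  proof (intro sum.cong refl)
    fix A B assume B: "B \<in> Pow {1..n}"
    show "lmul q n (ebas A) (ebas B) V * uform q n c m (W # (X @ [A]) @ [B]) =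
      lmul q n (ebas A) (ebas B) V * (\<Sum>\<beta>\<in>multidx n m. c \<beta> W B * fbeta q n \<beta> (X @ [A]))"
      using uform_app[OF W B, of q c m "X @ [A]"] by simp
  qed
  also have "\<dots> = (\<Sum>j=1..n. \<Sum>B\<in>Pow {1..n}. lmul q n (ebas {j}) (ebas B) V * (\<Sum>\<beta>\<in>multidx n m. c \<beta> W B * fbeta q n \<beta> (X @ [{j}])))"
    by (rule sum_sgl) (use fbeta_non[of n _ q _ X "[]"] in simp)
  also have "\<dots> = (\<Sum>j=1..n. \<Sum>B\<in>Pow {1..n}. \<Sum>\<beta>\<in>multidx n m. G j B \<beta>)"
  proof (intro sum.cong refl)
    fix j B assume j: "j \<in> {1..n}"
    show "lmul q n (ebas {j}) (ebas B) V * (\<Sum>\<beta>\<in>multidx n m. c \<beta> W B * fbeta q n \<beta> (X @ [{j}])) =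
        (\<Sum>\<beta>\<in>multidx n m. G j B \<beta>)"
      unfolding sum_distrib_left by (intro sum.cong refl) (simp add: G_def fbeta_snoc[OF j] ac_simps)
  qed
  also have "\<dots> = (\<Sum>\<beta>\<in>multidx n m. \<Sum>j=1..n. \<Sum>B\<in>Pow {1..n}. G j B \<beta>)"
    by (rule swap3b)
  also have "\<dots> = SR q n c m W V X"
    unfolding SR_def Rc_def
  proof (intro sum.cong refl)
    fix \<beta> j
    show "(\<Sum>B\<in>Pow {1..n}. G j B \<beta>) = (if \<beta> j = 0 then 0 else (\<Sum>B\<in>Pow {1..n}. lmul q n (ebas {j}) (ebas B) V * c \<beta> W B *
       (\<Prod>k\<in>{j<..n}. q j k ^ \<beta> k)) * fbeta q n (\<beta>(j := \<beta> j - 1)) X)"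
      unfolding G_def sum_distrib_right by simp
  qed
  finally show ?thesis .
qed

lemma Tmid:
  fixes q :: "nat \<Rightarrow> nat \<Rightarrow> 'k::field_char_0"
  assumes qnz: "\<forall>i\<in>{1..n}. \<forall>j\<in>{1..n}. q i j \<noteq> 0"
    and qinv: "\<forall>i\<in>{1..n}. \<forall>j\<in>{1..n}. q j i = inverse (q i j)"
    and W: "W \<in> Pow {1..n}" and V: "V \<in> Pow {1..n}"
  shows "(\<Sum>A\<in>Pow {1..n}. \<Sum>B\<in>Pow {1..n}. lmul q n (ebas A) (ebas B) U * uform q n c m (W # (xs @ [A, B] @ ys) @ [V])) = 0"
proof -
  have "(\<Sum>A\<in>Pow {1..n}. \<Sum>B\<in>Pow {1..n}. lmul q n (ebas A) (ebas B) U * uform q n c m (W # (xs @ [A, B] @ ys) @ [V]))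
    = (\<Sum>A\<in>Pow {1..n}. \<Sum>B\<in>Pow {1..n}. \<Sum>\<beta>\<in>multidx n m. c \<beta> W V * (lmul q n (ebas A) (ebas B) U * fbeta q n \<beta> (xs @ [A, B] @ ys)))"
  proof (intro sum.cong refl)
    fix A B
    have "uform q n c m (W # (xs @ [A, B] @ ys) @ [V]) = (\<Sum>\<beta>\<in>multidx n m. c \<beta> W V * fbeta q n \<beta> (xs @ [A, B] @ ys))"
      by (rule uform_app[OF W V])
    then show "lmul q n (ebas A) (ebas B) U * uform q n c m (W # (xs @ [A, B] @ ys) @ [V]) =
      (\<Sum>\<beta>\<in>multidx n m. c \<beta> W V * (lmul q n (ebas A) (ebas B) U * fbeta q n \<beta> (xs @ [A, B] @ ys)))"
      by (simp add: sum_distrib_left ac_simps)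
  qed
  also have "\<dots> = (\<Sum>\<beta>\<in>multidx n m. \<Sum>A\<in>Pow {1..n}. \<Sum>B\<in>Pow {1..n}. c \<beta> W V * (lmul q n (ebas A) (ebas B) U * fbeta q n \<beta> (xs @ [A, B] @ ys)))"
    by (rule swap3b)
  also have "\<dots> = (\<Sum>\<beta>\<in>multidx n m. c \<beta> W V * (\<Sum>A\<in>Pow {1..n}. \<Sum>B\<in>Pow {1..n}. lmul q n (ebas A) (ebas B) U * fbeta q n \<beta> (xs @ [A, B] @ ys)))"
    by (simp only: sum_distrib_left)
  also have "\<dots> = 0" using cancel[OF qnz qinv] by simp
  finally show ?thesis .
qed



lemma fdec_supp:
  assumes "\<beta> \<in> multidx n m" "j \<in> {1..n}" "\<beta> j \<noteq> 0" "fbeta q n (\<beta>(j := \<beta> j - 1)) X \<noteq> 0"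
  shows "length X = m - 1 \<and> set X \<subseteq> Pow {1..n}"
proof -
  have "bsize n (\<beta>(j := \<beta> j - 1)) + \<beta> j = bsize n \<beta> + (\<beta> j - 1)" by (rule bsize_upd[OF assms(2)])
  then have "bsize n (\<beta>(j := \<beta> j - 1)) = m - 1" using assms(1,3) by (simp add: multidx_def)
  moreover have "length X = bsize n (\<beta>(j := \<beta> j - 1)) \<and> (\<forall>x\<in>set X. sgl n x)" by (rule fbeta_supp[OF assms(4)])
  ultimately show ?thesis by (auto simp: sgl_def)
qed

lemma SL_zero:
  assumes "\<not> (length X = m - 1 \<and> set X \<subseteq> Pow {1..n})"
  shows "SL q n c m W V X = 0" "SR q n c m W V X = 0"
proof -
  have z: "fbeta q n (\<beta>(j := \<beta> j - 1)) X = 0" if "\<beta> \<in> multidx n m" "j \<in> {1..n}" "\<beta> j \<noteq> 0" for \<beta> j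
    using fdec_supp[OF that] assms by blast
  show "SL q n c m W V X = 0" unfolding SL_def
  proof (intro sum.neutral ballI)
    fix \<beta> j assume b: "\<beta> \<in> multidx n m" and j: "j \<in> {1..n}"
    show "(if \<beta> j = 0 then 0 else Lc q n c \<beta> j W V * fbeta q n (\<beta>(j := \<beta> j - 1)) X) = 0"
      by (cases "\<beta> j = 0") (use z[OF b j] in simp_all)
  qed
  show "SR q n c m W V X = 0" unfolding SR_def
  proof (intro sum.neutral ballI)
    fix \<beta> j assume b: "\<beta> \<in> multidx n m" and j: "j \<in> {1..n}"
    show "(if \<beta> j = 0 then 0 else Rc q n c \<beta> j W V * fbeta q n (\<beta>(j := \<beta> j - 1)) X) = 0"
      by (cases "\<beta> j = 0") (use z[OF b j] in simp_all)
  qed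
qed

lemma main:
  fixes q :: "nat \<Rightarrow> nat \<Rightarrow> 'k::field_char_0"
  assumes m: "m \<ge> 1"
    and qnz: "\<forall>i\<in>{1..n}. \<forall>j\<in>{1..n}. q i j \<noteq> 0"
    and qinv: "\<forall>i\<in>{1..n}. \<forall>j\<in>{1..n}. q j i = inverse (q i j)"
  shows "bar_d q n m (uform q n c m) vs = (if 2 \<le> length vs \<and> hd vs \<in> Pow {1..n} \<and> last vs \<in> Pow {1..n}
     then SL q n c m (hd vs) (last vs) (butlast (tl vs)) + (-1)^m * SR q n c m (hd vs) (last vs) (butlast (tl vs)) else 0)"
proof (cases "length vs = m + 1 \<and> set vs \<subseteq> Pow {1..n}")
  case False
  have l: "bar_d q n m (uform q n c m) vs = 0" using False by (rule bar_d_zero)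
  show ?thesis
  proof (cases "2 \<le> length vs")
    case True
    then obtain W X V where vs: "vs = W # X @ [V]" by (rule decomp_list)
    show ?thesis
    proof (cases "W \<in> Pow {1..n} \<and> V \<in> Pow {1..n}")
      case WV: True
      then have "\<not> (length X = m - 1 \<and> set X \<subseteq> Pow {1..n})"
        using False m unfolding vs by auto
      from SL_zero[OF this, of q c W V] show ?thesis using l WV unfolding vs by simp
    next
      case WV: False
      then show ?thesis using l unfolding vs by auto
    qed
  next
    case False
    then show ?thesis using l by simp
  qed
next
  case True
  then have len: "length vs = m + 1" and sP: "set vs \<subseteq> Pow {1..n}" by auto
  then have "2 \<le> length vs" using m by simp
  then obtain W X V where vs: "vs = W # X @ [V]" by (rule decomp_list)
  have lX: "length X = m - 1" using len vs by simp
  have W: "W \<in> Pow {1..n}" and V: "V \<in> Pow {1..n}" using sP vs by auto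
  define T where "T i = (\<Sum>A\<in>Pow {1..n}. \<Sum>B\<in>Pow {1..n}. lmul q n (ebas A) (ebas B) (vs ! i) *
      uform q n c m (take i vs @ [A, B] @ drop (i+1) vs))" for i
  have "bar_d q n m (uform q n c m) vs = (\<Sum>i\<le>m. (-1)^i * T i)"
    unfolding T_def by (rule bar_d_full[OF len sP])
  also have "\<dots> = (-1)^0 * T 0 + (-1)^m * T m"
  proof (rule sum_ends[OF m])
    fix i assume i: "0 < i" "i < m"
    then obtain i' where i': "i = Suc i'" by (cases i) auto
    have e: "take i vs @ [A, B] @ drop (i+1) vs = W # (take i' X @ [A, B] @ drop i X) @ [V]" for A B
      using i i' lX unfolding vs by simp
    have "T i = 0" unfolding T_def e by (rule Tmid[OF qnz qinv W V])
    then show "(-1)^i * T i = 0" by simp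
  qed
  also have "T 0 = SL q n c m W V X"
  proof -
    have e: "take 0 vs @ [A, B] @ drop (0+1) vs = A # (B # X) @ [V]" for A B unfolding vs by simp
    have "vs ! 0 = W" unfolding vs by simp
    then show ?thesis unfolding T_def e by (simp only: T0[OF W V])
  qed
  also have "T m = SR q n c m W V X"
  proof -
    have mX: "m = Suc (length X)" using lX m by linarith
    have e: "take m vs @ [A, B] @ drop (m+1) vs = W # (X @ [A]) @ [B]" for A B
      unfolding vs mX by simp
    have "vs ! m = V" unfolding vs mX by (simp add: nth_append)
    then show ?thesis unfolding T_def e by (simp only: Tm[OF W V])
  qed
  finally show ?thesis using W V unfolding vs by simp
qed



lemma finite_multidx: "finite (multidx n m)"
proof -
  have "multidx n m \<subseteq> {f. \<forall>x. (x \<in> {1..n} \<longrightarrow> f x \<in> {..m}) \<and> (x \<notin> {1..n} \<longrightarrow> f x = 0)}"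
  proof
    fix \<beta> assume b: "\<beta> \<in> multidx n m"
    have "\<beta> x \<le> m" if "x \<in> {1..n}" for x
      using bsize_ge[OF that, of \<beta>] b by (simp add: multidx_def)
    then show "\<beta> \<in> {f. \<forall>x. (x \<in> {1..n} \<longrightarrow> f x \<in> {..m}) \<and> (x \<notin> {1..n} \<longrightarrow> f x = 0)}"
      using b by (auto simp: multidx_def)
  qed
  moreover have "finite {f. \<forall>x. (x \<in> {1..n} \<longrightarrow> f x \<in> {..m}) \<and> (x \<notin> {1..n} \<longrightarrow> f x = (0::nat))}"
    by (rule finite_set_of_finite_funs) auto
  ultimately show ?thesis by (rule finite_subset)
qed

lemma reindex_dec:
  assumes j: "j \<in> {1..n}" and m: "m \<ge> 1"
  shows "(\<Sum>\<beta>\<in>multidx n m. if \<beta> j = 0 then 0 else F \<beta>) = (\<Sum>\<beta>'\<in>multidx n (m - 1). F (\<beta>'(j := Suc (\<beta>' j))))"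
proof -
  have "(\<Sum>\<beta>\<in>multidx n m. if \<beta> j = 0 then 0 else F \<beta>) = (\<Sum>\<beta>\<in>multidx n m. if \<beta> j \<noteq> 0 then F \<beta> else 0)"
    by (intro sum.cong) auto
  also have "\<dots> = (\<Sum>\<beta>\<in>{\<beta>\<in>multidx n m. \<beta> j \<noteq> 0}. F \<beta>)"
    by (rule sum.inter_filter[OF finite_multidx, symmetric])
  also have "\<dots> = (\<Sum>\<beta>'\<in>multidx n (m - 1). F (\<beta>'(j := Suc (\<beta>' j))))"
  proof (rule sum.reindex_bij_witness[where j = "\<lambda>\<beta>. \<beta>(j := \<beta> j - 1)" and i = "\<lambda>\<beta>'. \<beta>'(j := Suc (\<beta>' j))"])
    fix b assume b: "b \<in> multidx n (m - 1)"
    show "(b(j := Suc (b j)))(j := (b(j := Suc (b j))) j - 1) = b" by simp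
    have "bsize n (b(j := Suc (b j))) + b j = bsize n b + Suc (b j)" by (rule bsize_upd[OF j])
    then have "bsize n (b(j := Suc (b j))) = m" using b m by (simp add: multidx_def)
    then show "b(j := Suc (b j)) \<in> {\<beta> \<in> multidx n m. \<beta> j \<noteq> 0}" using b j by (auto simp: multidx_def)
  next
    fix a assume a: "a \<in> {\<beta> \<in> multidx n m. \<beta> j \<noteq> 0}"
    then show "(a(j := a j - 1))(j := Suc ((a(j := a j - 1)) j)) = a" by auto
    have "bsize n (a(j := a j - 1)) + a j = bsize n a + (a j - 1)" by (rule bsize_upd[OF j])
    then have "bsize n (a(j := a j - 1)) = m - 1" using a by (simp add: multidx_def)
    then show "a(j := a j - 1) \<in> multidx n (m - 1)" using a j by (auto simp: multidx_def)
  qed auto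
  finally show ?thesis .
qed

lemma lact_Cons: "lact q n a u (W # rest) = (\<Sum>T\<in>Pow {1..n}. lmul q n a (ebas T) W * u (T # rest))"
  by (simp add: lact_def)
lemma lact_Nil: "lact q n a u [] = 0"
  by (simp add: lact_def)
lemma ract_snoc: "ract q n u b (xs @ [V]) = (\<Sum>T\<in>Pow {1..n}. lmul q n (ebas T) b V * u (xs @ [T]))"
  by (simp add: ract_def)
lemma ract_Nil: "ract q n u b [] = 0"
  by (simp add: ract_def)
lemma ft_app: "ft q n \<beta> (W # X @ [V]) = (if W = {} \<and> V = {} then fbeta q n \<beta> X else 0)"
  by (simp add: ft_def)
lemma ft_short: "length ws < 2 \<Longrightarrow> ft q n \<beta> ws = 0"
  by (simp add: ft_def)
lemma lmul_e0: "lmul q n (ebas {}) (ebas T) V = (if T \<subseteq> {1..n} \<and> T = V then 1 else 0)"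
  "lmul q n (ebas S) (ebas {}) W = (if S \<subseteq> {1..n} \<and> S = W then 1 else 0)"
  by (auto simp: lmul_ebas)

lemma short_cases: "length ws < 2 \<Longrightarrow> ws = [] \<or> (\<exists>W. ws = [W])"
  by (cases ws) auto

lemma sum_pick0: "(\<Sum>T\<in>Pow {1..(n::nat)}. (if T = {} then g T else 0)) = g {}"
  by (rule trans[OF sum.delta]) auto

lemma ract_ft: "ract q n (ft q n \<beta>) (ebas T) (W # X @ [V]) = (if W = {} \<and> T \<subseteq> {1..n} \<and> V = T then fbeta q n \<beta> X else 0)"
proof -
  have "ract q n (ft q n \<beta>) (ebas T) ((W # X) @ [V]) = (\<Sum>T'\<in>Pow {1..n}. lmul q n (ebas T') (ebas T) V * ft q n \<beta> ((W # X) @ [T']))"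
    by (rule ract_snoc)
  also have "\<dots> = (\<Sum>T'\<in>Pow {1..n}. if T' = {} then lmul q n (ebas {}) (ebas T) V * (if W = {} then fbeta q n \<beta> X else 0) else 0)"
    by (intro sum.cong refl) (simp add: ft_app)
  finally show ?thesis unfolding sum_pick0 lmul_e0 by auto
qed

lemma ract_ft_short: "length ws < 2 \<Longrightarrow> ract q n (ft q n \<beta>) b ws = 0"
  using short_cases[of ws] by (auto simp: ract_Nil ract_snoc[where xs = "[]", simplified] ft_short)

lemma lact_ract_ft: "lact q n (ebas S) (ract q n (ft q n \<beta>) (ebas T)) (W # X @ [V]) =
   (if S \<subseteq> {1..n} \<and> S = W \<and> T \<subseteq> {1..n} \<and> V = T then fbeta q n \<beta> X else 0)"
proof -
  have "lact q n (ebas S) (ract q n (ft q n \<beta>) (ebas T)) (W # X @ [V]) =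
     (\<Sum>T'\<in>Pow {1..n}. if T' = {} then lmul q n (ebas S) (ebas {}) W * (if T \<subseteq> {1..n} \<and> V = T then fbeta q n \<beta> X else 0) else 0)"
    unfolding lact_Cons by (intro sum.cong refl) (simp add: ract_ft)
  then show ?thesis unfolding sum_pick0 lmul_e0 by auto
qed

lemma lact_short: "length ws < 2 \<Longrightarrow> lact q n a (ract q n (ft q n \<beta>) b) ws = 0"
  using short_cases[of ws] by (auto simp: lact_Nil lact_Cons ract_ft_short)

lemma env_ft:
  "envact q n lam (ft q n \<beta>) ws = (if 2 \<le> length ws \<and> hd ws \<in> Pow {1..n} \<and> last ws \<in> Pow {1..n}
     then lam (hd ws) (last ws) * fbeta q n \<beta> (butlast (tl ws)) else 0)"
proof (cases "2 \<le> length ws")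
  case False
  then show ?thesis by (simp add: envact_def lact_short)
next
  case True
  then obtain W X V where ws: "ws = W # X @ [V]" by (rule decomp_list)
  define C where "C = (if W \<in> Pow {1..n} \<and> V \<in> Pow {1..n} then lam W V * fbeta q n \<beta> X else 0)"
  have "envact q n lam (ft q n \<beta>) ws = (\<Sum>S\<in>Pow {1..n}. \<Sum>T\<in>Pow {1..n}. if S = W then (if T = V then C else 0) else 0)"
    unfolding envact_def ws lact_ract_ft C_def by (intro sum.cong refl) auto
  also have "\<dots> = (\<Sum>S\<in>Pow {1..n}. if S = W then (\<Sum>T\<in>Pow {1..n}. if T = V then C else 0) else 0)"
    by (intro sum.cong refl) simp
  also have "\<dots> = (if W \<in> Pow {1..n} then (if V \<in> Pow {1..n} then C else 0) else 0)"
    by (simp only: sum.delta finite_Pow_iff finite_atLeastAtMost)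
  finally show ?thesis unfolding ws C_def by simp
qed



lemma SL_reidx:
  assumes m: "m \<ge> 1"
  shows "SL q n c m W V X = (\<Sum>j=1..n. \<Sum>\<beta>'\<in>multidx n (m-1). Lc q n c (\<beta>'(j := Suc (\<beta>' j))) j W V * fbeta q n \<beta>' X)"
proof -
  have "SL q n c m W V X = (\<Sum>j=1..n. \<Sum>\<beta>\<in>multidx n m. if \<beta> j = 0 then 0 else Lc q n c \<beta> j W V * fbeta q n (\<beta>(j := \<beta> j - 1)) X)"
    unfolding SL_def by (rule sum.swap)
  also have "\<dots> = (\<Sum>j=1..n. \<Sum>\<beta>'\<in>multidx n (m-1). Lc q n c (\<beta>'(j := Suc (\<beta>' j))) j W V * fbeta q n \<beta>' X)"
  proof (rule sum.cong[OF refl])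
    fix j assume j: "j \<in> {1..n}"
    show "(\<Sum>\<beta>\<in>multidx n m. if \<beta> j = 0 then 0 else Lc q n c \<beta> j W V * fbeta q n (\<beta>(j := \<beta> j - 1)) X) =
      (\<Sum>\<beta>'\<in>multidx n (m-1). Lc q n c (\<beta>'(j := Suc (\<beta>' j))) j W V * fbeta q n \<beta>' X)"
      by (subst reindex_dec[OF j m]) simp
  qed
  finally show ?thesis .
qed

lemma SR_reidx:
  assumes m: "m \<ge> 1"
  shows "SR q n c m W V X = (\<Sum>j=1..n. \<Sum>\<beta>'\<in>multidx n (m-1). Rc q n c (\<beta>'(j := Suc (\<beta>' j))) j W V * fbeta q n \<beta>' X)"
proof -
  have "SR q n c m W V X = (\<Sum>j=1..n. \<Sum>\<beta>\<in>multidx n m. if \<beta> j = 0 then 0 else Rc q n c \<beta> j W V * fbeta q n (\<beta>(j := \<beta> j - 1)) X)"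
    unfolding SR_def by (rule sum.swap)
  also have "\<dots> = (\<Sum>j=1..n. \<Sum>\<beta>'\<in>multidx n (m-1). Rc q n c (\<beta>'(j := Suc (\<beta>' j))) j W V * fbeta q n \<beta>' X)"
  proof (rule sum.cong[OF refl])
    fix j assume j: "j \<in> {1..n}"
    show "(\<Sum>\<beta>\<in>multidx n m. if \<beta> j = 0 then 0 else Rc q n c \<beta> j W V * fbeta q n (\<beta>(j := \<beta> j - 1)) X) =
      (\<Sum>\<beta>'\<in>multidx n (m-1). Rc q n c (\<beta>'(j := Suc (\<beta>' j))) j W V * fbeta q n \<beta>' X)"
      by (subst reindex_dec[OF j m]) simp
  qed
  finally show ?thesis .
qed

lemma comb:
  fixes L R :: "nat \<Rightarrow> (nat \<Rightarrow> nat) \<Rightarrow> 'k::field" and f :: "(nat \<Rightarrow> nat) \<Rightarrow> 'k"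
  shows "(\<Sum>j\<in>J. \<Sum>b\<in>B. L j b * f b) + s * (\<Sum>j\<in>J. \<Sum>b\<in>B. R j b * f b) = (\<Sum>b\<in>B. (\<Sum>j\<in>J. L j b + s * R j b) * f b)"
proof -
  have "(\<Sum>b\<in>B. (\<Sum>j\<in>J. L j b + s * R j b) * f b) = (\<Sum>b\<in>B. \<Sum>j\<in>J. L j b * f b + s * (R j b * f b))"
    unfolding sum_distrib_right by (intro sum.cong refl) (simp add: algebra_simps)
  also have "\<dots> = (\<Sum>j\<in>J. \<Sum>b\<in>B. L j b * f b + s * (R j b * f b))" by (rule sum.swap)
  also have "\<dots> = (\<Sum>j\<in>J. \<Sum>b\<in>B. L j b * f b) + s * (\<Sum>j\<in>J. \<Sum>b\<in>B. R j b * f b)"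
    by (simp add: sum.distrib sum_distrib_left)
  finally show ?thesis by simp
qed

lemma part1:
  fixes q :: "nat \<Rightarrow> nat \<Rightarrow> 'k::field_char_0"
  assumes m: "m \<ge> 1"
    and qnz: "\<forall>i\<in>{1..n}. \<forall>j\<in>{1..n}. q i j \<noteq> 0"
    and qinv: "\<forall>i\<in>{1..n}. \<forall>j\<in>{1..n}. q j i = inverse (q i j)"
    and u: "u \<in> Pm q n m"
  shows "bar_d q n m u \<in> Pm q n (m - 1)"
proof -
  obtain c where uc: "u = (\<lambda>ws. \<Sum>\<beta>\<in>multidx n m. envact q n (c \<beta>) (ft q n \<beta>) ws)"
    using u by (auto simp: Pm_def)
  have uu: "u = uform q n c m"
  proof (rule ext)
    fix ws
    show "u ws = uform q n c m ws"
    proof (cases "2 \<le> length ws \<and> hd ws \<in> Pow {1..n} \<and> last ws \<in> Pow {1..n}")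
      case True then show ?thesis unfolding uc uform_def env_ft by (simp only: if_P[OF True] simp_thms if_True)
    next
      case False then show ?thesis unfolding uc uform_def env_ft by (simp only: if_not_P[OF False] if_False sum.neutral_const)
    qed
  qed
  define c' where "c' \<beta>' S T = (\<Sum>j=1..n. Lc q n c (\<beta>'(j := Suc (\<beta>' j))) j S T + (-1)^m * Rc q n c (\<beta>'(j := Suc (\<beta>' j))) j S T)"
    for \<beta>' S T
  have "bar_d q n m u = (\<lambda>ws. \<Sum>\<beta>'\<in>multidx n (m-1). envact q n (c' \<beta>') (ft q n \<beta>') ws)"
  proof (rule ext)
    fix ws
    show "bar_d q n m u ws = (\<Sum>\<beta>'\<in>multidx n (m-1). envact q n (c' \<beta>') (ft q n \<beta>') ws)"
    proof (cases "2 \<le> length ws \<and> hd ws \<in> Pow {1..n} \<and> last ws \<in> Pow {1..n}")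
      case True
      have "bar_d q n m u ws = SL q n c m (hd ws) (last ws) (butlast (tl ws)) + (-1)^m * SR q n c m (hd ws) (last ws) (butlast (tl ws))"
        unfolding uu main[OF m qnz qinv] using True by simp
      also have "\<dots> = (\<Sum>\<beta>'\<in>multidx n (m-1). c' \<beta>' (hd ws) (last ws) * fbeta q n \<beta>' (butlast (tl ws)))"
        unfolding SL_reidx[OF m] SR_reidx[OF m] comb c'_def ..
      also have "\<dots> = (\<Sum>\<beta>'\<in>multidx n (m-1). envact q n (c' \<beta>') (ft q n \<beta>') ws)"
        unfolding env_ft using True by simp
      finally show ?thesis .
    next
      case False
      then show ?thesis unfolding uu main[OF m qnz qinv] env_ft by (simp only: if_not_P[OF False] if_False sum.neutral_const)
    qed
  qed
  then show ?thesis unfolding Pm_def by blast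
qed



definition c0 :: "(nat \<Rightarrow> nat) \<Rightarrow> (nat \<Rightarrow> nat) \<Rightarrow> nat set \<Rightarrow> nat set \<Rightarrow> 'k::field" where
  "c0 \<beta> \<beta>' A B = (if \<beta>' = \<beta> \<and> A = {} \<and> B = {} then 1 else 0)"

lemma ft_uform:
  assumes b: "\<beta> \<in> multidx n m"
  shows "ft q n \<beta> = uform q n (c0 \<beta>) m"
proof (rule ext)
  fix ws
  show "ft q n \<beta> ws = uform q n (c0 \<beta>) m ws"
  proof (cases "2 \<le> length ws")
    case False
    then show ?thesis by (simp add: ft_short uform_def)
  next
    case True
    then obtain W X V where ws: "ws = W # X @ [V]" by (rule decomp_list)
    have "(\<Sum>\<beta>'\<in>multidx n m. c0 \<beta> \<beta>' W V * fbeta q n \<beta>' X) =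
        (\<Sum>\<beta>'\<in>multidx n m. if \<beta>' = \<beta> then (if W = {} \<and> V = {} then fbeta q n \<beta> X else 0) else 0)"
      by (intro sum.cong refl) (simp add: c0_def)
    also have "\<dots> = (if W = {} \<and> V = {} then fbeta q n \<beta> X else 0)"
      using b finite_multidx by simp
    finally show ?thesis unfolding ws ft_app uform_def by auto
  qed
qed

lemma Lc_c0:
  assumes j: "j \<in> {1..n}"
  shows "Lc q n (c0 \<beta>) \<beta>' j W V = (if \<beta>' = \<beta> \<and> V = {} \<and> W = {j} then (\<Prod>k\<in>{1..<j}. q k j ^ \<beta> k) else 0)"
proof -
  have "Lc q n (c0 \<beta>) \<beta>' j W V = (\<Sum>A\<in>Pow {1..n}. if A = {} then lmul q n (ebas {}) (ebas {j}) W *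
      (if \<beta>' = \<beta> \<and> V = {} then 1 else 0) * (\<Prod>k\<in>{1..<j}. q k j ^ \<beta>' k) else 0)"
    unfolding Lc_def by (intro sum.cong refl) (simp add: c0_def)
  then show ?thesis unfolding sum_pick0 lmul_e0 using j by auto
qed

lemma Rc_c0:
  assumes j: "j \<in> {1..n}"
  shows "Rc q n (c0 \<beta>) \<beta>' j W V = (if \<beta>' = \<beta> \<and> W = {} \<and> V = {j} then (\<Prod>k\<in>{j<..n}. q j k ^ \<beta> k) else 0)"
proof -
  have "Rc q n (c0 \<beta>) \<beta>' j W V = (\<Sum>B\<in>Pow {1..n}. if B = {} then lmul q n (ebas {j}) (ebas {}) V *
      (if \<beta>' = \<beta> \<and> W = {} then 1 else 0) * (\<Prod>k\<in>{j<..n}. q j k ^ \<beta>' k) else 0)"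
    unfolding Rc_def by (intro sum.cong refl) (simp add: c0_def)
  then show ?thesis unfolding sum_pick0 lmul_e0 using j by auto
qed

lemma SL_c0:
  assumes b: "\<beta> \<in> multidx n m"
  shows "SL q n (c0 \<beta>) m W V X = (\<Sum>j=1..n. if \<beta> j \<noteq> 0 \<and> V = {} \<and> W = {j} then
      (\<Prod>k\<in>{1..<j}. q k j ^ \<beta> k) * fbeta q n (\<beta>(j := \<beta> j - 1)) X else 0)"
proof -
  have "SL q n (c0 \<beta>) m W V X = (\<Sum>\<beta>'\<in>multidx n m. if \<beta>' = \<beta> then (\<Sum>j=1..n. if \<beta> j \<noteq> 0 \<and> V = {} \<and> W = {j} then
      (\<Prod>k\<in>{1..<j}. q k j ^ \<beta> k) * fbeta q n (\<beta>(j := \<beta> j - 1)) X else 0) else 0)"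
    unfolding SL_def
  proof (intro sum.cong refl)
    fix \<beta>'
    show "(\<Sum>j=1..n. if \<beta>' j = 0 then 0 else Lc q n (c0 \<beta>) \<beta>' j W V * fbeta q n (\<beta>'(j := \<beta>' j - 1)) X) =
      (if \<beta>' = \<beta> then (\<Sum>j=1..n. if \<beta> j \<noteq> 0 \<and> V = {} \<and> W = {j} then
      (\<Prod>k\<in>{1..<j}. q k j ^ \<beta> k) * fbeta q n (\<beta>(j := \<beta> j - 1)) X else 0) else 0)"
    proof (cases "\<beta>' = \<beta>")
      case True
      then show ?thesis by (auto intro!: sum.cong simp: Lc_c0)
    next
      case False
      then show ?thesis by (auto intro!: sum.neutral simp: Lc_c0)
    qed
  qed
  then show ?thesis using b finite_multidx by simp
qed

lemma SR_c0:
  assumes b: "\<beta> \<in> multidx n m"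
  shows "SR q n (c0 \<beta>) m W V X = (\<Sum>j=1..n. if \<beta> j \<noteq> 0 \<and> W = {} \<and> V = {j} then
      (\<Prod>k\<in>{j<..n}. q j k ^ \<beta> k) * fbeta q n (\<beta>(j := \<beta> j - 1)) X else 0)"
proof -
  have "SR q n (c0 \<beta>) m W V X = (\<Sum>\<beta>'\<in>multidx n m. if \<beta>' = \<beta> then (\<Sum>j=1..n. if \<beta> j \<noteq> 0 \<and> W = {} \<and> V = {j} then
      (\<Prod>k\<in>{j<..n}. q j k ^ \<beta> k) * fbeta q n (\<beta>(j := \<beta> j - 1)) X else 0) else 0)"
    unfolding SR_def
  proof (intro sum.cong refl)
    fix \<beta>'
    show "(\<Sum>j=1..n. if \<beta>' j = 0 then 0 else Rc q n (c0 \<beta>) \<beta>' j W V * fbeta q n (\<beta>'(j := \<beta>' j - 1)) X) =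
      (if \<beta>' = \<beta> then (\<Sum>j=1..n. if \<beta> j \<noteq> 0 \<and> W = {} \<and> V = {j} then
      (\<Prod>k\<in>{j<..n}. q j k ^ \<beta> k) * fbeta q n (\<beta>(j := \<beta> j - 1)) X else 0) else 0)"
    proof (cases "\<beta>' = \<beta>")
      case True
      then show ?thesis by (auto intro!: sum.cong simp: Rc_c0)
    next
      case False
      then show ?thesis by (auto intro!: sum.neutral simp: Rc_c0)
    qed
  qed
  then show ?thesis using b finite_multidx by simp
qed

lemma lact_fdec:
  assumes j: "j \<in> {1..n}"
  shows "lact q n (ebas {j}) (fdec q n \<beta> j) (W # X @ [V]) = (if \<beta> j \<noteq> 0 \<and> V = {} \<and> W = {j} then fbeta q n (\<beta>(j := \<beta> j - 1)) X else 0)"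
proof (cases "\<beta> j = 0")
  case True
  then show ?thesis by (simp add: fdec_def lact_Cons)
next
  case False
  have "lact q n (ebas {j}) (fdec q n \<beta> j) (W # X @ [V]) = (\<Sum>T\<in>Pow {1..n}. if T = {} then
      lmul q n (ebas {j}) (ebas {}) W * (if V = {} then fbeta q n (\<beta>(j := \<beta> j - 1)) X else 0) else 0)"
    unfolding lact_Cons fdec_def using False by (intro sum.cong refl) (simp add: ft_app)
  then show ?thesis unfolding sum_pick0 lmul_e0 using j False by auto
qed

lemma ract_fdec:
  assumes j: "j \<in> {1..n}"
  shows "ract q n (fdec q n \<beta> j) (ebas {j}) (W # X @ [V]) = (if \<beta> j \<noteq> 0 \<and> W = {} \<and> V = {j} then fbeta q n (\<beta>(j := \<beta> j - 1)) X else 0)"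
proof (cases "\<beta> j = 0")
  case True
  then show ?thesis using ract_snoc[of q n _ _ "W # X" V] by (simp add: fdec_def)
next
  case False
  have "ract q n (fdec q n \<beta> j) (ebas {j}) ((W # X) @ [V]) = (\<Sum>T\<in>Pow {1..n}. if T = {} then
      lmul q n (ebas {}) (ebas {j}) V * (if W = {} then fbeta q n (\<beta>(j := \<beta> j - 1)) X else 0) else 0)"
    unfolding ract_snoc fdec_def using False by (intro sum.cong refl) (simp add: ft_app)
  then show ?thesis unfolding sum_pick0 lmul_e0 using j False by auto
qed

lemma fdec_short:
  assumes "length ws < 2"
  shows "lact q n a (fdec q n \<beta> j) ws = 0" "ract q n (fdec q n \<beta> j) b ws = 0"
proof -
  have z: "fdec q n \<beta> j [T] = 0" for T by (simp add: fdec_def ft_short)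
  show "lact q n a (fdec q n \<beta> j) ws = 0"
    using short_cases[OF assms] by (auto simp: lact_Nil lact_Cons z)
  show "ract q n (fdec q n \<beta> j) b ws = 0"
    using short_cases[OF assms] ract_snoc[of q n "fdec q n \<beta> j" b "[]"] by (auto simp: ract_Nil z)
qed



lemma part2:
  fixes q :: "nat \<Rightarrow> nat \<Rightarrow> 'k::field_char_0"
  assumes m: "m \<ge> 1"
    and qnz: "\<forall>i\<in>{1..n}. \<forall>j\<in>{1..n}. q i j \<noteq> 0"
    and qinv: "\<forall>i\<in>{1..n}. \<forall>j\<in>{1..n}. q j i = inverse (q i j)"
    and b: "\<beta> \<in> multidx n m"
  shows "bar_d q n m (ft q n \<beta>) =
            (\<lambda>ws. \<Sum>j=1..n.
               (\<Prod>l\<in>{1..<j}. q l j ^ \<beta> l) * lact q n (ebas {j}) (fdec q n \<beta> j) ws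
             + (-1)^m * (\<Prod>l\<in>{j<..n}. q j l ^ \<beta> l) * ract q n (fdec q n \<beta> j) (ebas {j}) ws)"
proof (rule ext)
  fix ws
  have L: "bar_d q n m (ft q n \<beta>) ws = (if 2 \<le> length ws \<and> hd ws \<in> Pow {1..n} \<and> last ws \<in> Pow {1..n}
     then SL q n (c0 \<beta>) m (hd ws) (last ws) (butlast (tl ws)) + (-1)^m * SR q n (c0 \<beta>) m (hd ws) (last ws) (butlast (tl ws)) else 0)"
    unfolding ft_uform[OF b] by (rule main[OF m qnz qinv])
  show "bar_d q n m (ft q n \<beta>) ws = (\<Sum>j=1..n.
               (\<Prod>l\<in>{1..<j}. q l j ^ \<beta> l) * lact q n (ebas {j}) (fdec q n \<beta> j) ws
             + (-1)^m * (\<Prod>l\<in>{j<..n}. q j l ^ \<beta> l) * ract q n (fdec q n \<beta> j) (ebas {j}) ws)"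
  proof (cases "2 \<le> length ws")
    case False
    then have "length ws < 2" by simp
    then show ?thesis unfolding L using False by (simp add: fdec_short)
  next
    case True
    then obtain W X V where ws: "ws = W # X @ [V]" by (rule decomp_list)
    have R: "(\<Sum>j=1..n.
               (\<Prod>l\<in>{1..<j}. q l j ^ \<beta> l) * lact q n (ebas {j}) (fdec q n \<beta> j) ws
             + (-1)^m * (\<Prod>l\<in>{j<..n}. q j l ^ \<beta> l) * ract q n (fdec q n \<beta> j) (ebas {j}) ws)
      = (\<Sum>j=1..n.
               (\<Prod>l\<in>{1..<j}. q l j ^ \<beta> l) * (if \<beta> j \<noteq> 0 \<and> V = {} \<and> W = {j} then fbeta q n (\<beta>(j := \<beta> j - 1)) X else 0)
             + (-1)^m * (\<Prod>l\<in>{j<..n}. q j l ^ \<beta> l) * (if \<beta> j \<noteq> 0 \<and> W = {} \<and> V = {j} then fbeta q n (\<beta>(j := \<beta> j - 1)) X else 0))"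
      unfolding ws by (intro sum.cong refl) (simp add: lact_fdec ract_fdec)
    show ?thesis
    proof (cases "W \<in> Pow {1..n} \<and> V \<in> Pow {1..n}")
      case True
      have "bar_d q n m (ft q n \<beta>) ws = SL q n (c0 \<beta>) m W V X + (-1)^m * SR q n (c0 \<beta>) m W V X"
        unfolding L using True unfolding ws by simp
      also have "\<dots> = (\<Sum>j=1..n.
               (\<Prod>l\<in>{1..<j}. q l j ^ \<beta> l) * (if \<beta> j \<noteq> 0 \<and> V = {} \<and> W = {j} then fbeta q n (\<beta>(j := \<beta> j - 1)) X else 0)
             + (-1)^m * (\<Prod>l\<in>{j<..n}. q j l ^ \<beta> l) * (if \<beta> j \<noteq> 0 \<and> W = {} \<and> V = {j} then fbeta q n (\<beta>(j := \<beta> j - 1)) X else 0))"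
        unfolding SL_c0[OF b] SR_c0[OF b] sum_distrib_left sum.distrib[symmetric]
        by (intro sum.cong refl) simp
      finally show ?thesis using R by simp
    next
      case False
      have "bar_d q n m (ft q n \<beta>) ws = 0" unfolding L using False unfolding ws by auto
      moreover have "(\<Sum>j=1..n.
               (\<Prod>l\<in>{1..<j}. q l j ^ \<beta> l) * (if \<beta> j \<noteq> 0 \<and> V = {} \<and> W = {j} then fbeta q n (\<beta>(j := \<beta> j - 1)) X else 0)
             + (-1)^m * (\<Prod>l\<in>{j<..n}. q j l ^ \<beta> l) * (if \<beta> j \<noteq> 0 \<and> W = {} \<and> V = {j} then fbeta q n (\<beta>(j := \<beta> j - 1)) X else 0)) = 0"
        using False by (intro sum.neutral ballI) auto
      ultimately show ?thesis using R by simp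
    qed
  qed
qed

theorem lemma3p3:
  fixes q :: "nat \<Rightarrow> nat \<Rightarrow> 'k::field_char_0" and n :: nat
  assumes "n \<ge> 1"
    and "\<forall>i\<in>{1..n}. \<forall>j\<in>{1..n}. q i j \<noteq> 0"
    and "\<forall>i\<in>{1..n}. \<forall>j\<in>{1..n}. q j i = inverse (q i j)"
    and "\<forall>i\<in>{1..n}. q i i = -1"
  shows "(\<forall>m\<ge>1. \<forall>u\<in>Pm q n m. bar_d q n m u \<in> Pm q n (m - 1))
       \<and> (\<forall>m\<ge>1. \<forall>\<beta>\<in>multidx n m. bar_d q n m (ft q n \<beta>) =
            (\<lambda>ws. \<Sum>j=1..n.
               (\<Prod>l\<in>{1..<j}. q l j ^ \<beta> l) * lact q n (ebas {j}) (fdec q n \<beta> j) ws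
             + (-1)^m * (\<Prod>l\<in>{j<..n}. q j l ^ \<beta> l) * ract q n (fdec q n \<beta> j) (ebas {j}) ws))"
  using part1[OF _ assms(2,3)] part2[OF _ assms(2,3)] by blast

end
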